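(* Let $k=\mathbb{F}_q$ with $q$ a power of $2$. Every non-singular quartic plane curve $C\subseteq\mathbb{P}^2$ defined over $k$ with exactly one bitangent is $k$-isomorphic to a curve $C_Q: Q(x,y,z)^2=x(y^3+x^2z)$, where $Q=ax^2+by^2+cz^2+dxy+eyz+fzx$ has coefficients in $k$ and $c\neq0$.
   Context: Bitangents are lines in $\mathbb{P}^2$ (over $\overline{k}$) that are tangent to $C$ at two points or have contact of order 4. In characteristic 2 a non-singular plane quartic has 7, 4, 2 or 1 bitangents. *)

theory Defs
  imports "HOL-Algebra.Algebraic_Closure_Type" "HOL-Computational_Algebra.Polynomial"
begin

text \<open>A ternary form of degree d is given by its coefficient function c:
  c i j is the coefficient of x^i y^j z^(d-i-j) (only i+j \<le> d is relevant).\<close>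

definition tform_eval :: "nat \<Rightarrow> (nat \<Rightarrow> nat \<Rightarrow> 'a::comm_semiring_1) \<Rightarrow> 'a \<Rightarrow> 'a \<Rightarrow> 'a \<Rightarrow> 'a" where
  "tform_eval d c x y z = (\<Sum>i\<le>d. \<Sum>j\<le>d-i. c i j * x ^ i * y ^ j * z ^ (d - i - j))"

definition dX :: "nat \<Rightarrow> (nat \<Rightarrow> nat \<Rightarrow> 'a::comm_semiring_1) \<Rightarrow> nat \<Rightarrow> nat \<Rightarrow> 'a" where
  "dX d c i j = of_nat (Suc i) * c (Suc i) j"
definition dY :: "nat \<Rightarrow> (nat \<Rightarrow> nat \<Rightarrow> 'a::comm_semiring_1) \<Rightarrow> nat \<Rightarrow> nat \<Rightarrow> 'a" where
  "dY d c i j = of_nat (Suc j) * c i (Suc j)"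
definition dZ :: "nat \<Rightarrow> (nat \<Rightarrow> nat \<Rightarrow> 'a::comm_semiring_1) \<Rightarrow> nat \<Rightarrow> nat \<Rightarrow> 'a" where
  "dZ d c i j = of_nat (d - i - j) * c i j"

definition ac_form :: "(nat \<Rightarrow> nat \<Rightarrow> 'k::field) \<Rightarrow> nat \<Rightarrow> nat \<Rightarrow> 'k alg_closure" where
  "ac_form c i j = to_ac (c i j)"

definition nonsingular_quartic :: "(nat \<Rightarrow> nat \<Rightarrow> 'k::field) \<Rightarrow> bool" where
  "nonsingular_quartic c \<longleftrightarrow>
     (\<exists>i j. i + j \<le> 4 \<and> c i j \<noteq> 0) \<and>
     \<not> (\<exists>x y z :: 'k alg_closure. (x, y, z) \<noteq> (0, 0, 0) \<and>
          tform_eval 4 (ac_form c) x y z = 0 \<and>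
          tform_eval 3 (dX 4 (ac_form c)) x y z = 0 \<and>
          tform_eval 3 (dY 4 (ac_form c)) x y z = 0 \<and>
          tform_eval 3 (dZ 4 (ac_form c)) x y z = 0)"

text \<open>Points and lines of P^2 are represented by nonzero triples (homogeneous coordinates).\<close>
definition on_line :: "'a::comm_ring_1 \<times> 'a \<times> 'a \<Rightarrow> 'a \<times> 'a \<times> 'a \<Rightarrow> bool" where
  "on_line l P \<longleftrightarrow> (case l of (l1, l2, l3) \<Rightarrow> case P of (p1, p2, p3) \<Rightarrow> l1 * p1 + l2 * p2 + l3 * p3 = 0)"

text \<open>Two triples are linearly independent (distinct projective points): cross product nonzero.\<close>
definition indep3 :: "'a::comm_ring_1 \<times> 'a \<times> 'a \<Rightarrow> 'a \<times> 'a \<times> 'a \<Rightarrow> bool" where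
  "indep3 P R \<longleftrightarrow> (case P of (p1, p2, p3) \<Rightarrow> case R of (r1, r2, r3) \<Rightarrow>
      (p2 * r3 - p3 * r2, p3 * r1 - p1 * r3, p1 * r2 - p2 * r1) \<noteq> (0, 0, 0))"

text \<open>Restriction of the quartic (over the algebraic closure) to the line through P and R,
  parametrised as t \<mapsto> P + t R: a univariate polynomial in t.\<close>
definition restrict_line :: "(nat \<Rightarrow> nat \<Rightarrow> 'k::field) \<Rightarrow> 'k alg_closure \<times> 'k alg_closure \<times> 'k alg_closure
     \<Rightarrow> 'k alg_closure \<times> 'k alg_closure \<times> 'k alg_closure \<Rightarrow> 'k alg_closure poly" where
  "restrict_line c P R = (case P of (p1, p2, p3) \<Rightarrow> case R of (r1, r2, r3) \<Rightarrow>
      tform_eval 4 (\<lambda>i j. [:ac_form c i j:]) [:p1, r1:] [:p2, r2:] [:p3, r3:])"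

text \<open>The line l meets the curve at the point P with contact order (intersection
  multiplicity) at least m; the line is required not to be contained in the curve.\<close>
definition contact_ge :: "(nat \<Rightarrow> nat \<Rightarrow> 'k::field) \<Rightarrow> 'k alg_closure \<times> 'k alg_closure \<times> 'k alg_closure
     \<Rightarrow> 'k alg_closure \<times> 'k alg_closure \<times> 'k alg_closure \<Rightarrow> nat \<Rightarrow> bool" where
  "contact_ge c l P m \<longleftrightarrow> on_line l P \<and>
     (\<exists>R. on_line l R \<and> indep3 P R \<and> restrict_line c P R \<noteq> 0 \<and> order 0 (restrict_line c P R) \<ge> m)"

definition bitangent :: "(nat \<Rightarrow> nat \<Rightarrow> 'k::field) \<Rightarrow> 'k alg_closure \<times> 'k alg_closure \<times> 'k alg_closure \<Rightarrow> bool" where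
  "bitangent c l \<longleftrightarrow> l \<noteq> (0, 0, 0) \<and>
     ((\<exists>P Q. contact_ge c l P 2 \<and> contact_ge c l Q 2 \<and> indep3 P Q) \<or>
      (\<exists>P. P \<noteq> (0, 0, 0) \<and> contact_ge c l P 4))"

text \<open>The curve has exactly one bitangent (lines counted as projective points of the dual plane).\<close>
definition exactly_one_bitangent :: "(nat \<Rightarrow> nat \<Rightarrow> 'k::field) \<Rightarrow> bool" where
  "exactly_one_bitangent c \<longleftrightarrow>
     (\<exists>l. bitangent c l \<and> (\<forall>l'. bitangent c l' \<longrightarrow> (\<exists>\<mu>. l' = (\<mu> * fst l, \<mu> * fst (snd l), \<mu> * snd (snd l)))))"

definition det3 :: "(nat \<Rightarrow> nat \<Rightarrow> 'a::comm_ring_1) \<Rightarrow> 'a" where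
  "det3 M = M 0 0 * (M 1 1 * M 2 2 - M 1 2 * M 2 1)
          - M 0 1 * (M 1 0 * M 2 2 - M 1 2 * M 2 0)
          + M 0 2 * (M 1 0 * M 2 1 - M 1 1 * M 2 0)"

text \<open>k-isomorphism of plane quartics: a projective linear change of coordinates over k
  carrying one defining form to a nonzero k-multiple of the other (identity of forms,
  tested on all points over the (infinite) algebraic closure).  G is the other defining
  form, given as a function on the algebraic closure.\<close>
definition k_isomorphic :: "(nat \<Rightarrow> nat \<Rightarrow> 'k::field)
     \<Rightarrow> ('k alg_closure \<Rightarrow> 'k alg_closure \<Rightarrow> 'k alg_closure \<Rightarrow> 'k alg_closure) \<Rightarrow> bool" where
  "k_isomorphic c G \<longleftrightarrow> (\<exists>(M :: nat \<Rightarrow> nat \<Rightarrow> 'k) (s :: 'k). det3 M \<noteq> 0 \<and> s \<noteq> 0 \<and>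
     (\<forall>x y z :: 'k alg_closure.
        tform_eval 4 (ac_form c)
          (to_ac (M 0 0) * x + to_ac (M 0 1) * y + to_ac (M 0 2) * z)
          (to_ac (M 1 0) * x + to_ac (M 1 1) * y + to_ac (M 1 2) * z)
          (to_ac (M 2 0) * x + to_ac (M 2 1) * y + to_ac (M 2 2) * z)
        = to_ac s * G x y z))"

definition CQ_form :: "'k::field \<Rightarrow> 'k \<Rightarrow> 'k \<Rightarrow> 'k \<Rightarrow> 'k \<Rightarrow> 'k
     \<Rightarrow> 'k alg_closure \<Rightarrow> 'k alg_closure \<Rightarrow> 'k alg_closure \<Rightarrow> 'k alg_closure" where
  "CQ_form a b c d e f x y z =
     (to_ac a * x^2 + to_ac b * y^2 + to_ac c * z^2 + to_ac d * x * y + to_ac e * y * z + to_ac f * z * x)^2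
     - x * (y^3 + x^2 * z)"

end

theory Submission
  imports Defs
begin

lemma c2_bit0: assumes "(2::'a::comm_ring_1) = 0" shows "(numeral (Num.Bit0 n)::'a) = 0"
  by (metis assms mult_2 mult_zero_left numeral_Bit0)
lemma c2_bit1: assumes "(2::'a::comm_ring_1) = 0" shows "(numeral (Num.Bit1 n)::'a) = 1"
  by (metis c2_bit0[OF assms] numeral_Bit0 numeral_Bit1 add_0)
lemma c2_two: assumes "CHAR('a::comm_ring_1) = 2" shows "(2::'a) = 0"
  by (metis assms of_nat_CHAR of_nat_numeral)

lemma tf4: "tform_eval 4 c x y z =
  c 0 0 * z^4 + c 0 1 * y * z^3 + c 0 2 * y^2 * z^2 + c 0 3 * y^3 * z + c 0 4 * y^4
 + c 1 0 * x * z^3 + c 1 1 * x * y * z^2 + c 1 2 * x * y^2 * z + c 1 3 * x * y^3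
 + c 2 0 * x^2 * z^2 + c 2 1 * x^2 * y * z + c 2 2 * x^2 * y^2
 + c 3 0 * x^3 * z + c 3 1 * x^3 * y + c 4 0 * x^4"
  by (simp add: tform_eval_def numeral_eq_Suc atMost_Suc algebra_simps)

lemma tf3: "tform_eval 3 c x y z =
  c 0 0 * z^3 + c 0 1 * y * z^2 + c 0 2 * y^2 * z + c 0 3 * y^3
 + c 1 0 * x * z^2 + c 1 1 * x * y * z + c 1 2 * x * y^2
 + c 2 0 * x^2 * z + c 2 1 * x^2 * y + c 3 0 * x^3"
  by (simp add: tform_eval_def numeral_eq_Suc atMost_Suc algebra_simps)

lemma alg_closed_infinite: "infinite (UNIV :: 'a::alg_closed_field set)"
proof
  assume fin: "finite (UNIV :: 'a set)"
  define p :: "'a poly" where "p = (\<Prod>a\<in>UNIV. [:-a, 1:]) + 1"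
  have d: "degree (\<Prod>a\<in>(UNIV :: 'a set). [:-a, 1:]) = card (UNIV :: 'a set)"
    by (simp add: degree_prod_sum_eq)
  have "card (UNIV :: 'a set) > 0" using fin by (simp add: finite_UNIV_card_ge_0)
  hence "degree p > 0" unfolding p_def using d
    by (metis add.commute add_0 degree_add_eq_right degree_1)
  then obtain x where "poly p x = 0" using alg_closed_imp_poly_has_root by blast
  moreover have "poly (\<Prod>a\<in>UNIV. [:-a, 1:]) x = 0"
    using fin by (auto simp: poly_prod prod_zero_iff)
  ultimately show False by (simp add: p_def)
qed

lemma poly_eq_on_infinite:
  fixes p q :: "'a::idom poly"
  assumes "infinite S" "\<And>t. t \<in> S \<Longrightarrow> poly p t = poly q t"
  shows "p = q"
proof (rule ccontr)
  assume "p \<noteq> q"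
  hence "p - q \<noteq> 0" by simp
  hence "finite {t. poly (p - q) t = 0}" by (rule poly_roots_finite)
  moreover have "S \<subseteq> {t. poly (p - q) t = 0}" using assms(2) by auto
  ultimately show False using assms(1) finite_subset by blast
qed

lemma poly_eq_alg_closed:
  fixes p q :: "'a::alg_closed_field poly"
  assumes "\<And>t. poly p t = poly q t" shows "p = q"
  by (rule poly_eq_on_infinite[OF alg_closed_infinite]) (use assms in auto)

lemma poly_eq_alg_closed_nz:
  fixes p q :: "'a::alg_closed_field poly"
  assumes "\<And>t. t \<noteq> 0 \<Longrightarrow> poly p t = poly q t" shows "p = q"
proof (rule poly_eq_on_infinite[of "UNIV - {0}"])
  show "infinite (UNIV - {0::'a})" using alg_closed_infinite by simp
qed (use assms in auto)

section \<open>Restriction of forms to lines\<close>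

definition tpoly :: "nat \<Rightarrow> (nat \<Rightarrow> nat \<Rightarrow> 'a::comm_ring_1) \<Rightarrow> 'a \<times> 'a \<times> 'a \<Rightarrow> 'a \<times> 'a \<times> 'a \<Rightarrow> 'a poly" where
  "tpoly d c P R = (case P of (p1, p2, p3) \<Rightarrow> case R of (r1, r2, r3) \<Rightarrow>
      tform_eval d (\<lambda>i j. [:c i j:]) [:p1, r1:] [:p2, r2:] [:p3, r3:])"

definition ev :: "nat \<Rightarrow> (nat \<Rightarrow> nat \<Rightarrow> 'a::comm_ring_1) \<Rightarrow> 'a \<times> 'a \<times> 'a \<Rightarrow> 'a" where
  "ev d c P = (case P of (x, y, z) \<Rightarrow> tform_eval d c x y z)"

definition padd :: "'a::comm_ring_1 \<times> 'a \<times> 'a \<Rightarrow> 'a \<Rightarrow> 'a \<times> 'a \<times> 'a \<Rightarrow> 'a \<times> 'a \<times> 'a" where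
  "padd P t R = (case P of (p1, p2, p3) \<Rightarrow> case R of (r1, r2, r3) \<Rightarrow> (p1 + t * r1, p2 + t * r2, p3 + t * r3))"

lemma restrict_line_tpoly: "restrict_line F P R = tpoly 4 (ac_form F) P R"
  by (simp add: restrict_line_def tpoly_def ac_form_def split: prod.splits)

lemma poly_tform: "poly (tform_eval d (\<lambda>i j. [:c i j:]) A B C) t = tform_eval d c (poly A t) (poly B t) (poly C t)"
  by (simp add: tform_eval_def poly_sum mult.assoc)

lemma poly_tpoly: "poly (tpoly d c P R) t = ev d c (padd P t R)"
  by (simp add: tpoly_def ev_def padd_def poly_tform algebra_simps split: prod.splits)

lemma degree_tform:
  assumes "degree A \<le> 1" "degree B \<le> 1" "degree C \<le> 1"
  shows "degree (tform_eval d (\<lambda>i j. [:c i j:]) A B C) \<le> d"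
proof -
  have t: "degree ([:c i j:] * A ^ i * B ^ j * C ^ (d - i - j)) \<le> d" if ij: "i \<le> d" "j \<le> d - i" for i j
  proof -
    have "degree ([:c i j:] * A ^ i * B ^ j * C ^ (d - i - j)) \<le> 0 + i + j + (d - i - j)"
      by (intro degree_mult_le[THEN order_trans] add_mono degree_power_le[THEN order_trans])
         (use assms in auto)
    also have "\<dots> = d" using ij by simp
    finally show ?thesis .
  qed
  show ?thesis unfolding tform_eval_def
    by (intro degree_sum_le) (use t in \<open>auto simp del: pCons_0_0 mult_pCons_left\<close>)
qed

lemma degree_tpoly: "degree (tpoly d c P R) \<le> d"
  by (auto simp: tpoly_def split: prod.splits intro!: degree_tform)

lemma tform_homog: "tform_eval d c (s * x) (s * y) (s * z) = s ^ d * tform_eval d c x y z"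
  unfolding tform_eval_def sum_distrib_left
proof (intro sum.cong refl)
  fix i j assume "i \<in> {..d}" "j \<in> {..d - i}"
  hence "i + j + (d - i - j) = d" by auto
  hence "s ^ d = s ^ i * s ^ j * s ^ (d - i - j)" by (metis power_add)
  thus "c i j * (s * x) ^ i * (s * y) ^ j * (s * z) ^ (d - i - j) =
        s ^ d * (c i j * x ^ i * y ^ j * z ^ (d - i - j))"
    by (simp add: power_mult_distrib mult_ac)
qed

lemma poly_as_sum: fixes p :: "'a::comm_ring_1 poly" assumes "degree p \<le> d" shows "poly p t = (\<Sum>i\<le>d. coeff p i * t ^ i)"
  unfolding poly_altdef by (rule sum.mono_neutral_left) (use assms in \<open>auto simp: coeff_eq_0\<close>)

lemma tpoly_reflect:
  fixes c :: "nat \<Rightarrow> nat \<Rightarrow> 'a::alg_closed_field"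
  assumes "k \<le> d"
  shows "coeff (tpoly d c R P) k = coeff (tpoly d c P R) (d - k)"
proof -
  define p where "p = tpoly d c P R"
  define p' where "p' = (\<Sum>i\<le>d. monom (coeff p i) (d - i))"
  have "tpoly d c R P = p'"
  proof (rule poly_eq_alg_closed_nz)
    fix s :: 'a assume s: "s \<noteq> 0"
    obtain p1 p2 p3 where P: "P = (p1, p2, p3)" by (cases P)
    obtain r1 r2 r3 where R: "R = (r1, r2, r3)" by (cases R)
    have "poly (tpoly d c R P) s = tform_eval d c (r1 + s * p1) (r2 + s * p2) (r3 + s * p3)"
      by (simp add: poly_tpoly ev_def padd_def P R)
    also have "\<dots> = tform_eval d c (s * (p1 + inverse s * r1)) (s * (p2 + inverse s * r2)) (s * (p3 + inverse s * r3))"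
      using s by (simp add: algebra_simps)
    also have "\<dots> = s ^ d * poly p (inverse s)"
      by (simp add: tform_homog p_def poly_tpoly ev_def padd_def P R)
    also have "\<dots> = s ^ d * (\<Sum>i\<le>d. coeff p i * inverse s ^ i)"
      by (simp add: poly_as_sum p_def degree_tpoly)
    also have "\<dots> = (\<Sum>i\<le>d. coeff p i * s ^ (d - i))"
      unfolding sum_distrib_left
    proof (intro sum.cong refl)
      fix i assume "i \<in> {..d}"
      hence "s ^ d = s ^ (d - i) * s ^ i" by (simp flip: power_add)
      thus "s ^ d * (coeff p i * inverse s ^ i) = coeff p i * s ^ (d - i)"
        using s by (simp add: power_inverse field_simps)
    qed
    also have "\<dots> = poly p' s" by (simp add: p'_def poly_sum poly_monom)
    finally show "poly (tpoly d c R P) s = poly p' s" .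
  qed
  hence "coeff (tpoly d c R P) k = (\<Sum>i\<le>d. if d - i = k then coeff p i else 0)"
    by (simp add: p'_def coeff_sum coeff_monom)
  also have "\<dots> = (\<Sum>i\<in>{d - k}. coeff p i)"
    by (rule sum.mono_neutral_cong_right) (use assms in auto)
  finally show ?thesis by (simp add: p_def)
qed

lemma coeff0_tpoly: "coeff (tpoly d c P R) 0 = ev d c P"
  by (simp add: poly_0_coeff_0[symmetric] poly_tpoly padd_def split: prod.splits)

lemma coeffd_tpoly:
  fixes c :: "nat \<Rightarrow> nat \<Rightarrow> 'a::alg_closed_field"
  shows "coeff (tpoly d c P R) d = ev d c R"
  using tpoly_reflect[of 0 d c R P] coeff0_tpoly[of d c R P] by simp

definition gd :: "(nat \<Rightarrow> nat \<Rightarrow> 'a::comm_ring_1) \<Rightarrow> 'a \<times> 'a \<times> 'a \<Rightarrow> 'a \<times> 'a \<times> 'a \<Rightarrow> 'a" where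
  "gd c P R = (case P of (p1, p2, p3) \<Rightarrow> case R of (r1, r2, r3) \<Rightarrow>
      r1 * tform_eval 3 (dX 4 c) p1 p2 p3 + r2 * tform_eval 3 (dY 4 c) p1 p2 p3 + r3 * tform_eval 3 (dZ 4 c) p1 p2 p3)"

lemma coeff1_pderiv: "coeff p 1 = poly (pderiv p) 0"
  by (simp add: poly_0_coeff_0 coeff_pderiv)

lemma coeff1_aux:
  fixes c :: "nat \<Rightarrow> nat \<Rightarrow> 'a::comm_ring_1"
  shows "coeff (tform_eval 4 (\<lambda>i j. [:c i j:]) [:p1,r1:] [:p2,r2:] [:p3,r3:]) 1 =
     r1 * tform_eval 3 (dX 4 c) p1 p2 p3 + r2 * tform_eval 3 (dY 4 c) p1 p2 p3 + r3 * tform_eval 3 (dZ 4 c) p1 p2 p3"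
  unfolding coeff1_pderiv tf4 tf3 dX_def dY_def dZ_def
  by (simp add: pderiv_mult pderiv_power pderiv_add pderiv_pCons algebra_simps power2_eq_square power3_eq_cube numeral_eq_Suc)

lemma coeff1_tpoly: "coeff (tpoly 4 c P R) 1 = gd c P R"
proof -
  obtain p1 p2 p3 where P: "P = (p1, p2, p3)" by (cases P)
  obtain r1 r2 r3 where R: "R = (r1, r2, r3)" by (cases R)
  show ?thesis unfolding P R tpoly_def gd_def by (simp only: prod.case coeff1_aux)
qed

lemma coeff3_tpoly:
  fixes c :: "nat \<Rightarrow> nat \<Rightarrow> 'a::alg_closed_field"
  shows "coeff (tpoly 4 c P R) 3 = gd c R P"
  using tpoly_reflect[of 1 4 c R P] coeff1_tpoly[of c R P] by simp

definition contact :: "(nat \<Rightarrow> nat \<Rightarrow> 'a::alg_closed_field) \<Rightarrow> 'a \<times> 'a \<times> 'a \<Rightarrow> 'a \<times> 'a \<times> 'a \<Rightarrow> nat \<Rightarrow> bool" where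
  "contact c l P m \<longleftrightarrow> on_line l P \<and>
     (\<exists>R. on_line l R \<and> indep3 P R \<and> tpoly 4 c P R \<noteq> 0 \<and> order 0 (tpoly 4 c P R) \<ge> m)"

definition bit :: "(nat \<Rightarrow> nat \<Rightarrow> 'a::alg_closed_field) \<Rightarrow> 'a \<times> 'a \<times> 'a \<Rightarrow> bool" where
  "bit c l \<longleftrightarrow> l \<noteq> (0, 0, 0) \<and>
     ((\<exists>P Q. contact c l P 2 \<and> contact c l Q 2 \<and> indep3 P Q) \<or>
      (\<exists>P. P \<noteq> (0, 0, 0) \<and> contact c l P 4))"

lemma bitangent_bit: "bitangent F l = bit (ac_form F) l"
  by (simp add: bitangent_def bit_def contact_ge_def contact_def restrict_line_tpoly)

lemma on_line_padd: assumes "on_line l P" "on_line l R" shows "on_line l (padd P t R)"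
proof -
  obtain l1 l2 l3 where L: "l = (l1, l2, l3)" by (cases l)
  obtain p1 p2 p3 where P: "P = (p1, p2, p3)" by (cases P)
  obtain r1 r2 r3 where R: "R = (r1, r2, r3)" by (cases R)
  have "l1 * (p1 + t * r1) + l2 * (p2 + t * r2) + l3 * (p3 + t * r3) =
        (l1 * p1 + l2 * p2 + l3 * p3) + t * (l1 * r1 + l2 * r2 + l3 * r3)"
    by (simp add: algebra_simps)
  thus ?thesis using assms by (simp add: L P R on_line_def padd_def)
qed

lemma indep3_padd_R: "indep3 (padd P t R) R \<longleftrightarrow> indep3 P R"
  by (auto simp: indep3_def padd_def split: prod.splits) (auto simp: algebra_simps)

lemma indep3_swap: "indep3 P R \<Longrightarrow> indep3 R P"
  by (auto simp: indep3_def split: prod.splits) (auto simp: algebra_simps)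

lemma indep3_nz: "indep3 P R \<Longrightarrow> P \<noteq> (0, 0, 0)" "indep3 P R \<Longrightarrow> R \<noteq> (0, 0, 0)"
  by (auto simp: indep3_def)

lemma indep3_padd2:
  fixes P R :: "'a::field \<times> 'a \<times> 'a"
  assumes "r \<noteq> s" "indep3 P R" shows "indep3 (padd P r R) (padd P s R)"
proof -
  obtain p1 p2 p3 where P: "P = (p1, p2, p3)" by (cases P)
  obtain r1 r2 r3 where R: "R = (r1, r2, r3)" by (cases R)
  have e: "(p2 + r * r2) * (p3 + s * r3) - (p3 + r * r3) * (p2 + s * r2) = (s - r) * (p2 * r3 - p3 * r2)"
          "(p3 + r * r3) * (p1 + s * r1) - (p1 + r * r1) * (p3 + s * r3) = (s - r) * (p3 * r1 - p1 * r3)"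
          "(p1 + r * r1) * (p2 + s * r2) - (p2 + r * r2) * (p1 + s * r1) = (s - r) * (p1 * r2 - p2 * r1)"
    by (simp_all add: algebra_simps)
  show ?thesis using assms unfolding P R indep3_def padd_def by (simp only: prod.case e) auto
qed

lemma tpoly_shift:
  fixes c :: "nat \<Rightarrow> nat \<Rightarrow> 'a::alg_closed_field"
  shows "tpoly d c (padd P r R) R = pcompose (tpoly d c P R) [:r, 1:]"
proof (rule poly_eq_alg_closed)
  fix t
  have "padd (padd P r R) t R = padd P (r + t) R"
    by (auto simp: padd_def split: prod.splits) (simp_all add: algebra_simps)
  thus "poly (tpoly d c (padd P r R) R) t = poly (pcompose (tpoly d c P R) [:r, 1:]) t"
    by (simp add: poly_tpoly poly_pcompose)
qed

lemma pcompose_1: "pcompose 1 q = 1"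
  by (metis one_pCons pcompose_const)

lemma pcompose_power': "pcompose (p ^ n) q = (pcompose p q) ^ n"
  for p q :: "'a::comm_ring_1 poly"
  by (induct n) (simp_all add: pcompose_mult pcompose_1)

lemma shift_dvd:
  fixes p :: "'a::comm_ring_1 poly"
  assumes "[:-r, 1:] ^ m dvd p" shows "monom 1 m dvd pcompose p [:r, 1:]"
proof -
  obtain h where h: "p = [:-r, 1:] ^ m * h" using assms by (auto elim: dvdE)
  have "pcompose [:-r, 1:] [:r, 1:] = [:0, 1:]" by (simp add: pcompose_pCons)
  hence "pcompose p [:r, 1:] = [:0, 1:] ^ m * pcompose h [:r, 1:]"
    by (simp add: h pcompose_mult pcompose_power')
  thus ?thesis by (simp add: monom_altdef)
qed

lemma order_ge_iff: "p \<noteq> 0 \<Longrightarrow> m \<le> order 0 p \<longleftrightarrow> (\<forall>k<m. coeff p k = 0)"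
  using monom_1_dvd_iff monom_1_dvd_iff' by blast

lemma contactI:
  fixes c :: "nat \<Rightarrow> nat \<Rightarrow> 'a::alg_closed_field"
  assumes "on_line l Q" "on_line l R" "indep3 Q R" "tpoly 4 c Q R \<noteq> 0" "monom 1 m dvd tpoly 4 c Q R"
  shows "contact c l Q m"
  using assms monom_1_dvd_iff unfolding contact_def by blast

lemma contact_shift:
  fixes c :: "nat \<Rightarrow> nat \<Rightarrow> 'a::alg_closed_field"
  assumes "on_line l P" "on_line l R" "indep3 P R" "tpoly 4 c P R \<noteq> 0" "[:-r, 1:] ^ m dvd tpoly 4 c P R"
  shows "contact c l (padd P r R) m"
proof (rule contactI[where R = R])
  show "tpoly 4 c (padd P r R) R \<noteq> 0"
    using assms(4) by (simp add: tpoly_shift pcompose_eq_0_iff)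
  show "monom 1 m dvd tpoly 4 c (padd P r R) R"
    using assms(5) by (simp add: tpoly_shift shift_dvd)
qed (use assms in \<open>auto simp: on_line_padd indep3_padd_R\<close>)

lemma poly_deg4:
  fixes p :: "'a::comm_ring_1 poly"
  assumes "degree p \<le> 4"
  shows "poly p t = coeff p 0 + coeff p 1 * t + coeff p 2 * t^2 + coeff p 3 * t^3 + coeff p 4 * t^4"
  using poly_as_sum[OF assms, of t] by (simp add: numeral_eq_Suc atMost_Suc)

lemma char2_sq3:
  fixes b0 b1 b2 t :: "'a::comm_ring_1"
  assumes h: "(2::'a) = 0"
  shows "(b0 + b1 * t + b2 * t^2)^2 = b0^2 + b1^2 * t^2 + b2^2 * t^4"
  apply (simp add: eval_nat_numeral algebra_simps)
  apply (simp add: c2_bit0[OF h] c2_bit1[OF h])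
  done

lemma square_bit:
  fixes c :: "nat \<Rightarrow> nat \<Rightarrow> 'a::alg_closed_field"
  assumes char: "CHAR('a) = 2" and l: "l \<noteq> (0, 0, 0)" "on_line l P" "on_line l R"
    and ind: "indep3 P R" and nz: "tpoly 4 c P R \<noteq> 0"
    and c1: "coeff (tpoly 4 c P R) 1 = 0" and c3: "coeff (tpoly 4 c P R) 3 = 0"
  shows "bit c l"
proof -
  have two: "(2::'a) = 0" by (rule c2_two[OF char])
  define p where "p = tpoly 4 c P R"
  have dp: "degree p \<le> 4" by (simp add: p_def degree_tpoly)
  obtain b0 where b0: "b0 ^ 2 = coeff p 0" using nth_root_exists[of 2] by auto
  obtain b1 where b1: "b1 ^ 2 = coeff p 2" using nth_root_exists[of 2] by auto
  obtain b2 where b2: "b2 ^ 2 = coeff p 4" using nth_root_exists[of 2] by auto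
  define g where "g = [:b0, b1, b2:]"
  have pg: "p = g ^ 2"
  proof (rule poly_eq_alg_closed)
    fix t
    have "poly p t = b0^2 + b1^2 * t^2 + b2^2 * t^4"
      using poly_deg4[OF dp, of t] c1 c3 b0 b1 b2 by (simp add: p_def)
    also have "\<dots> = (b0 + b1 * t + b2 * t^2)^2" by (rule char2_sq3[OF two, symmetric])
    also have "\<dots> = poly (g ^ 2) t" by (simp add: g_def algebra_simps power2_eq_square)
    finally show "poly p t = poly (g ^ 2) t" .
  qed
  have refl: "coeff (tpoly 4 c R P) k = coeff p (4 - k)" if "k \<le> 4" for k
    using tpoly_reflect[OF that] by (simp add: p_def)
  have onRP: "on_line l (padd P r R)" for r using l on_line_padd by blast
  have indR: "indep3 (padd P r R) R" for r using ind indep3_padd_R by blast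
  show ?thesis
  proof (cases "b2 = 0")
    case False
    hence gnz: "g \<noteq> 0" by (simp add: g_def)
    have dg: "degree g = 2" using False by (simp add: g_def)
    obtain r1 where r1: "poly g r1 = 0" using alg_closed_imp_poly_has_root[of g] dg by auto
    then obtain h where h: "g = [:-r1, 1:] * h" using poly_eq_0_iff_dvd by (metis dvdE)
    have hnz: "h \<noteq> 0" using gnz h by auto
    have dh: "degree h = 1" using dg h hnz degree_mult_eq[of "[:-r1, 1:]" h] by simp
    obtain r2 where r2: "poly h r2 = 0" using alg_closed_imp_poly_has_root[of h] dh by auto
    then obtain h2 where h2: "h = [:-r2, 1:] * h2" using poly_eq_0_iff_dvd by (metis dvdE)
    have pf: "p = [:-r1, 1:]^2 * [:-r2, 1:]^2 * h2^2"
      unfolding pg h h2 power_mult_distrib by (simp only: mult_ac)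
    show ?thesis
    proof (cases "r1 = r2")
      case True
      have "[:-r1, 1:]^4 dvd p" using pf True by (simp add: power_add[symmetric] mult.assoc)
      hence "contact c l (padd P r1 R) 4"
        using contact_shift[OF l(2,3) ind nz] by (simp add: p_def)
      moreover have "padd P r1 R \<noteq> (0, 0, 0)" using indR indep3_nz by blast
      ultimately show ?thesis unfolding bit_def using l by blast
    next
      case False
      have "[:-r1, 1:]^2 dvd p" unfolding pf mult.assoc by (rule dvd_triv_left)
      hence C1: "contact c l (padd P r1 R) 2"
        using contact_shift[OF l(2,3) ind nz] by (simp add: p_def)
      have "p = [:-r2, 1:]^2 * ([:-r1, 1:]^2 * h2^2)" unfolding pf by (simp only: mult_ac)
      hence "[:-r2, 1:]^2 dvd p" by (metis dvd_triv_left)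
      hence C2: "contact c l (padd P r2 R) 2"
        using contact_shift[OF l(2,3) ind nz] by (simp add: p_def)
      have "indep3 (padd P r1 R) (padd P r2 R)" using indep3_padd2[OF False ind] .
      thus ?thesis unfolding bit_def using l C1 C2 by blast
    qed
  next
    case b2z: True
    have a4: "coeff p 4 = 0" using b2 b2z by simp
    show ?thesis
    proof (cases "b1 = 0")
      case False
      define r1 where "r1 = - b0 / b1"
      have "g = smult b1 [:-r1, 1:]" using False b2z by (simp add: g_def r1_def)
      hence "p = smult (b1^2) ([:-r1, 1:]^2)" using pg by (simp only: smult_power)
      hence "[:-r1, 1:]^2 dvd p" by (simp add: dvd_smult)
      hence C1: "contact c l (padd P r1 R) 2"
        using contact_shift[OF l(2,3) ind nz] by (simp add: p_def)
      have q0: "coeff (tpoly 4 c R P) 0 = 0" using refl[of 0] a4 by simp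
      have q1: "coeff (tpoly 4 c R P) 1 = 0" using refl[of 1] c3 by (simp add: p_def)
      have "coeff p 2 \<noteq> 0"
      proof
        assume "coeff p 2 = 0"
        hence "b1 ^ 2 = 0" using b1 by simp
        thus False using False by simp
      qed
      hence "coeff (tpoly 4 c R P) 2 \<noteq> 0" using refl[of 2] by simp
      hence qnz: "tpoly 4 c R P \<noteq> 0" by auto
      have "monom 1 2 dvd tpoly 4 c R P"
        unfolding monom_1_dvd_iff' using q0 q1 by (auto simp: less_2_cases_iff)
      hence C2: "contact c l R 2"
        using contactI[OF l(3) l(2) indep3_swap[OF ind] qnz] by blast
      have "indep3 (padd P r1 R) R" using indR .
      thus ?thesis unfolding bit_def using l C1 C2 by blast
    next
      case True
      have a2: "coeff p 2 = 0" using b1 True by simp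
      have qz: "coeff (tpoly 4 c R P) k = 0" if "k < 4" for k
      proof -
        have "k = 0 \<or> k = 1 \<or> k = 2 \<or> k = 3" using that by auto
        thus ?thesis using refl[of k] a4 a2 c1 c3 by (auto simp: p_def)
      qed
      have "coeff p 0 \<noteq> 0"
      proof
        assume "coeff p 0 = 0"
        hence "b0 = 0" using b0 by simp
        hence "g = 0" using True b2z by (simp add: g_def)
        thus False using pg nz by (simp add: p_def)
      qed
      hence "coeff (tpoly 4 c R P) 4 \<noteq> 0" using refl[of 4] by simp
      hence qnz: "tpoly 4 c R P \<noteq> 0" by auto
      have "monom 1 4 dvd tpoly 4 c R P" unfolding monom_1_dvd_iff' using qz by auto
      hence "contact c l R 4"
        using contactI[OF l(3) l(2) indep3_swap[OF ind] qnz] by blast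
      moreover have "R \<noteq> (0, 0, 0)" using ind indep3_nz by blast
      ultimately show ?thesis unfolding bit_def using l by blast
    qed
  qed
qed

lemma lin_basis:
  fixes p1 p2 p3 r1 r2 r3 :: "'a::field"
  assumes "indep3 (p1, p2, p3) (r1, r2, r3)"
  shows "\<exists>D \<in> {(1, 0, 0), (0, 1, 0), (0, 0, 1)}. \<forall>g1 g2 g3.
     p1 * g1 + p2 * g2 + p3 * g3 = 0 \<longrightarrow> r1 * g1 + r2 * g2 + r3 * g3 = 0 \<longrightarrow>
     fst D * g1 + fst (snd D) * g2 + snd (snd D) * g3 = 0 \<longrightarrow> g1 = 0 \<and> g2 = 0 \<and> g3 = 0"
proof -
  consider (a) "p2 * r3 - p3 * r2 \<noteq> 0" | (b) "p3 * r1 - p1 * r3 \<noteq> 0" | (c) "p1 * r2 - p2 * r1 \<noteq> 0"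
    using assms by (auto simp: indep3_def)
  thus ?thesis
  proof cases
    case a
    show ?thesis
    proof (rule bexI[of _ "(1, 0, 0)"], intro allI impI)
      fix g1 g2 g3 :: 'a
      assume h: "p1 * g1 + p2 * g2 + p3 * g3 = 0" "r1 * g1 + r2 * g2 + r3 * g3 = 0"
        "fst (1::'a, 0::'a, 0::'a) * g1 + fst (snd (1::'a, 0::'a, 0::'a)) * g2 + snd (snd (1::'a, 0::'a, 0::'a)) * g3 = 0"
      hence g1: "g1 = 0" by simp
      have "g2 * (p2 * r3 - p3 * r2) = r3 * (p1 * g1 + p2 * g2 + p3 * g3) - p3 * (r1 * g1 + r2 * g2 + r3 * g3)"
        using g1 by (simp add: algebra_simps)
      hence "g2 = 0" using h a by simp
      moreover have "g3 * (p2 * r3 - p3 * r2) = p2 * (r1 * g1 + r2 * g2 + r3 * g3) - r2 * (p1 * g1 + p2 * g2 + p3 * g3)"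
        using g1 by (simp add: algebra_simps)
      hence "g3 = 0" using h a by simp
      ultimately show "g1 = 0 \<and> g2 = 0 \<and> g3 = 0" using g1 by simp
    qed simp
  next
    case b
    show ?thesis
    proof (rule bexI[of _ "(0, 1, 0)"], intro allI impI)
      fix g1 g2 g3 :: 'a
      assume h: "p1 * g1 + p2 * g2 + p3 * g3 = 0" "r1 * g1 + r2 * g2 + r3 * g3 = 0"
        "fst (0::'a, 1::'a, 0::'a) * g1 + fst (snd (0::'a, 1::'a, 0::'a)) * g2 + snd (snd (0::'a, 1::'a, 0::'a)) * g3 = 0"
      hence g2: "g2 = 0" by simp
      have "g3 * (p3 * r1 - p1 * r3) = r1 * (p1 * g1 + p2 * g2 + p3 * g3) - p1 * (r1 * g1 + r2 * g2 + r3 * g3)"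
        using g2 by (simp add: algebra_simps)
      hence "g3 = 0" using h b by simp
      moreover have "g1 * (p3 * r1 - p1 * r3) = p3 * (r1 * g1 + r2 * g2 + r3 * g3) - r3 * (p1 * g1 + p2 * g2 + p3 * g3)"
        using g2 by (simp add: algebra_simps)
      hence "g1 = 0" using h b by simp
      ultimately show "g1 = 0 \<and> g2 = 0 \<and> g3 = 0" using g2 by simp
    qed simp
  next
    case c
    show ?thesis
    proof (rule bexI[of _ "(0, 0, 1)"], intro allI impI)
      fix g1 g2 g3 :: 'a
      assume h: "p1 * g1 + p2 * g2 + p3 * g3 = 0" "r1 * g1 + r2 * g2 + r3 * g3 = 0"
        "fst (0::'a, 0::'a, 1::'a) * g1 + fst (snd (0::'a, 0::'a, 1::'a)) * g2 + snd (snd (0::'a, 0::'a, 1::'a)) * g3 = 0"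
      hence g3: "g3 = 0" by simp
      have "g1 * (p1 * r2 - p2 * r1) = r2 * (p1 * g1 + p2 * g2 + p3 * g3) - p2 * (r1 * g1 + r2 * g2 + r3 * g3)"
        using g3 by (simp add: algebra_simps)
      hence "g1 = 0" using h c by simp
      moreover have "g2 * (p1 * r2 - p2 * r1) = p1 * (r1 * g1 + r2 * g2 + r3 * g3) - r1 * (p1 * g1 + p2 * g2 + p3 * g3)"
        using g3 by (simp add: algebra_simps)
      hence "g2 = 0" using h c by simp
      ultimately show "g1 = 0 \<and> g2 = 0 \<and> g3 = 0" using g3 by simp
    qed simp
  qed
qed

definition gco :: "(nat \<Rightarrow> nat \<Rightarrow> 'a::comm_ring_1) \<Rightarrow> 'a \<times> 'a \<times> 'a \<Rightarrow> nat \<Rightarrow> nat \<Rightarrow> 'a" where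
  "gco c D i j = fst D * dX 4 c i j + fst (snd D) * dY 4 c i j + snd (snd D) * dZ 4 c i j"

lemma gd_gco: "gd c S D = ev 3 (gco c D) S"
  by (auto simp: gd_def ev_def gco_def tf3 split: prod.splits) (simp add: algebra_simps)

lemma euler: "gd c S S = 4 * ev 4 c S"
  by (auto simp: gd_def ev_def tf3 tf4 dX_def dY_def dZ_def split: prod.splits)
     (simp add: algebra_simps eval_nat_numeral)

lemma gd_padd: "gd c S (padd P u R) = gd c S P + u * gd c S R"
  by (auto simp: gd_def padd_def split: prod.splits) (simp add: algebra_simps)

lemma no_line:
  fixes c :: "nat \<Rightarrow> nat \<Rightarrow> 'a::alg_closed_field"
  assumes ns: "\<not> (\<exists>x y z. (x, y, z) \<noteq> (0, 0, 0) \<and> tform_eval 4 c x y z = 0 \<and>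
          tform_eval 3 (dX 4 c) x y z = 0 \<and> tform_eval 3 (dY 4 c) x y z = 0 \<and> tform_eval 3 (dZ 4 c) x y z = 0)"
    and ind: "indep3 P R"
  shows "tpoly 4 c P R \<noteq> 0"
proof
  assume p0: "tpoly 4 c P R = 0"
  obtain p1 p2 p3 where P: "P = (p1, p2, p3)" by (cases P)
  obtain r1 r2 r3 where R: "R = (r1, r2, r3)" by (cases R)
  obtain D where D: "D \<in> {(1, 0, 0), (0, 1, 0), (0, 0, 1)}" and
    DD: "\<And>g1 g2 g3. p1 * g1 + p2 * g2 + p3 * g3 = 0 \<Longrightarrow> r1 * g1 + r2 * g2 + r3 * g3 = 0 \<Longrightarrow>
     fst D * g1 + fst (snd D) * g2 + snd (snd D) * g3 = 0 \<Longrightarrow> g1 = 0 \<and> g2 = 0 \<and> g3 = 0"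
    using lin_basis[of p1 p2 p3 r1 r2 r3] ind P R by blast
  have key: "\<exists>S. S \<noteq> (0, 0, 0) \<and> ev 4 c S = 0 \<and> gd c S P = 0 \<and> gd c S R = 0 \<and> gd c S D = 0"
  proof -
    have onS: "ev 4 c S = 0 \<and> gd c S P = 0 \<and> gd c S R = 0" if S: "S = padd P u R" for S u
    proof -
      have e: "ev 4 c S = 0" using arg_cong[OF p0, of "\<lambda>q. poly q u"] by (simp add: poly_tpoly S)
      have "tpoly 4 c S R = 0" using p0 by (simp add: S tpoly_shift)
      hence r: "gd c S R = 0" using coeff1_tpoly[of c S R] by simp
      have "gd c S S = 0" using euler[of c S] e by simp
      hence "gd c S P = 0" using gd_padd[of c S P u R] r S by simp
      thus ?thesis using e r by simp
    qed
    have onR: "ev 4 c R = 0 \<and> gd c R P = 0 \<and> gd c R R = 0"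
    proof -
      have e: "ev 4 c R = 0" using coeffd_tpoly[of 4 c P R] p0 by simp
      have "coeff (tpoly 4 c R P) 1 = 0" using tpoly_reflect[of 1 4 c R P] p0 by simp
      hence "gd c R P = 0" using coeff1_tpoly[of c R P] by simp
      moreover have "gd c R R = 0" using euler[of c R] e by simp
      ultimately show ?thesis using e by simp
    qed
    define h where "h = tpoly 3 (gco c D) P R"
    show ?thesis
    proof (cases "degree h = 0")
      case False
      then obtain u where u: "poly h u = 0" using alg_closed_imp_poly_has_root by blast
      define S where "S = padd P u R"
      have "gd c S D = 0" using u by (simp add: h_def poly_tpoly gd_gco S_def)
      moreover have "indep3 S R" unfolding S_def using ind by (simp add: indep3_padd_R)
      hence "S \<noteq> (0, 0, 0)" by (rule indep3_nz)
      ultimately show ?thesis using onS[OF S_def] by blast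
    next
      case True
      have "coeff h 3 = 0" using True by (simp add: coeff_eq_0)
      hence "gd c R D = 0" by (simp add: h_def coeffd_tpoly gd_gco)
      moreover have "R \<noteq> (0, 0, 0)" using ind by (rule indep3_nz)
      ultimately show ?thesis using onR by blast
    qed
  qed
  then obtain S where S: "S \<noteq> (0, 0, 0)" "ev 4 c S = 0" "gd c S P = 0" "gd c S R = 0" "gd c S D = 0"
    by blast
  obtain x y z where Sx: "S = (x, y, z)" by (cases S)
  have "tform_eval 3 (dX 4 c) x y z = 0 \<and> tform_eval 3 (dY 4 c) x y z = 0 \<and> tform_eval 3 (dZ 4 c) x y z = 0"
    by (rule DD) (use S in \<open>simp_all add: Sx P R gd_def mult_ac split: prod.splits\<close>)
  thus False using ns S by (auto simp: Sx ev_def)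
qed

lemma gd_x0:
  fixes c :: "nat \<Rightarrow> nat \<Rightarrow> 'a::comm_ring_1"
  assumes h: "(2::'a) = 0"
  shows "gd c (0, p2, p3) (0, r2, r3) = (p2 * r3 - p3 * r2) * (c 0 1 * p3^2 + c 0 3 * p2^2)"
  unfolding gd_def tf3 dX_def dY_def dZ_def
  apply (simp add: eval_nat_numeral algebra_simps)
  apply (simp add: c2_bit0[OF h] c2_bit1[OF h] algebra_simps)
  done

lemma two_pts:
  fixes a b p2 p3 q2 q3 :: "'a::field"
  assumes h: "(2::'a) = 0" and d: "p2 * q3 - p3 * q2 \<noteq> 0"
    and e1: "a * p3^2 + b * p2^2 = 0" and e2: "a * q3^2 + b * q2^2 = 0"
  shows "a = 0 \<and> b = 0"
proof -
  have sq: "(p2 * q3 - p3 * q2)^2 = p2^2 * q3^2 - p3^2 * q2^2"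
    apply (simp add: eval_nat_numeral algebra_simps)
    apply (simp add: c2_bit0[OF h] c2_bit1[OF h] algebra_simps)
    done
  have "b * (p2^2 * q3^2 - p3^2 * q2^2) = q3^2 * (a * p3^2 + b * p2^2) - p3^2 * (a * q3^2 + b * q2^2)"
    by (simp add: algebra_simps)
  hence "b * (p2 * q3 - p3 * q2)^2 = 0" using e1 e2 sq by simp
  hence b: "b = 0" using d by simp
  have "a * (p2^2 * q3^2 - p3^2 * q2^2) = p2^2 * (a * q3^2 + b * q2^2) - q2^2 * (a * p3^2 + b * p2^2)"
    by (simp add: algebra_simps)
  hence "a * (p2 * q3 - p3 * q2)^2 = 0" using e1 e2 sq by simp
  hence "a = 0" using d by simp
  thus ?thesis using b by simp
qed

lemma contact_x0:
  fixes c :: "nat \<Rightarrow> nat \<Rightarrow> 'a::alg_closed_field"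
  assumes h: "(2::'a) = 0" and k: "\<kappa> \<noteq> 0" and C: "contact c (\<kappa>, 0, 0) P m" and m: "m \<ge> 2"
  shows "\<exists>p2 p3 r2 r3. P = (0, p2, p3) \<and> p2 * r3 - p3 * r2 \<noteq> 0 \<and> c 0 1 * p3^2 + c 0 3 * p2^2 = 0 \<and>
           (m \<ge> 4 \<longrightarrow> c 0 1 * r3^2 + c 0 3 * r2^2 = 0)"
proof -
  obtain p1 p2 p3 where P: "P = (p1, p2, p3)" by (cases P)
  from C obtain R where R: "on_line (\<kappa>, 0, 0) R" "indep3 P R" "tpoly 4 c P R \<noteq> 0" "m \<le> order 0 (tpoly 4 c P R)"
    and oP: "on_line (\<kappa>, 0, 0) P" unfolding contact_def by blast
  obtain r1 r2 r3 where Rr: "R = (r1, r2, r3)" by (cases R)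
  have p1: "p1 = 0" using oP k by (simp add: on_line_def P)
  have r1: "r1 = 0" using R(1) k by (simp add: on_line_def Rr)
  have d: "p2 * r3 - p3 * r2 \<noteq> 0" using R(2) by (simp add: indep3_def P Rr p1 r1)
  have cz: "\<forall>j<m. coeff (tpoly 4 c P R) j = 0" using order_ge_iff[OF R(3)] R(4) by blast
  have "gd c P R = 0" using cz m coeff1_tpoly[of c P R] by auto
  hence e1: "c 0 1 * p3^2 + c 0 3 * p2^2 = 0" using gd_x0[OF h, of c p2 p3 r2 r3] d by (simp add: P Rr p1 r1)
  have "m \<ge> 4 \<longrightarrow> c 0 1 * r3^2 + c 0 3 * r2^2 = 0"
  proof
    assume "m \<ge> 4"
    hence "gd c R P = 0" using cz coeff3_tpoly[of c P R] by auto
    moreover have "r2 * p3 - r3 * p2 \<noteq> 0" using d by (simp add: algebra_simps)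
    ultimately show "c 0 1 * r3^2 + c 0 3 * r2^2 = 0" using gd_x0[OF h, of c r2 r3 p2 p3] by (simp add: P Rr p1 r1)
  qed
  thus ?thesis using e1 d P p1 by blast
qed

lemma bit_x0:
  fixes c :: "nat \<Rightarrow> nat \<Rightarrow> 'a::alg_closed_field"
  assumes h: "(2::'a) = 0" and k: "\<kappa> \<noteq> 0" and B: "bit c (\<kappa>, 0, 0)"
  shows "c 0 1 = 0 \<and> c 0 3 = 0"
proof -
  from B consider (two) P Q where "contact c (\<kappa>, 0, 0) P 2" "contact c (\<kappa>, 0, 0) Q 2" "indep3 P Q"
    | (four) P where "contact c (\<kappa>, 0, 0) P 4" unfolding bit_def by blast
  thus ?thesis
  proof cases
    case two
    obtain p2 p3 where P: "P = (0, p2, p3)" "c 0 1 * p3^2 + c 0 3 * p2^2 = 0"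
      using contact_x0[OF h k two(1)] by auto
    obtain q2 q3 where Q: "Q = (0, q2, q3)" "c 0 1 * q3^2 + c 0 3 * q2^2 = 0"
      using contact_x0[OF h k two(2)] by auto
    have "p2 * q3 - p3 * q2 \<noteq> 0" using two(3) by (simp add: indep3_def P Q)
    thus ?thesis using two_pts[OF h _ P(2) Q(2)] by blast
  next
    case four
    obtain p2 p3 r2 r3 where "p2 * r3 - p3 * r2 \<noteq> 0" "c 0 1 * p3^2 + c 0 3 * p2^2 = 0" "c 0 1 * r3^2 + c 0 3 * r2^2 = 0"
      using contact_x0[OF h k four] by auto
    thus ?thesis using two_pts[OF h] by blast
  qed
qed

definition lin :: "(nat \<Rightarrow> nat \<Rightarrow> 'a::comm_ring_1) \<Rightarrow> 'a \<times> 'a \<times> 'a \<Rightarrow> 'a \<times> 'a \<times> 'a" where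
  "lin M P = (case P of (x, y, z) \<Rightarrow>
     (M 0 0 * x + M 0 1 * y + M 0 2 * z, M 1 0 * x + M 1 1 * y + M 1 2 * z, M 2 0 * x + M 2 1 * y + M 2 2 * z))"

definition lt :: "(nat \<Rightarrow> nat \<Rightarrow> 'a::comm_ring_1) \<Rightarrow> 'a \<times> 'a \<times> 'a \<Rightarrow> 'a \<times> 'a \<times> 'a" where
  "lt M l = (case l of (a, b, c) \<Rightarrow>
     (a * M 0 0 + b * M 1 0 + c * M 2 0, a * M 0 1 + b * M 1 1 + c * M 2 1, a * M 0 2 + b * M 1 2 + c * M 2 2))"

definition dot :: "'a::comm_ring_1 \<times> 'a \<times> 'a \<Rightarrow> 'a \<times> 'a \<times> 'a \<Rightarrow> 'a" where
  "dot l P = (case l of (l1, l2, l3) \<Rightarrow> case P of (p1, p2, p3) \<Rightarrow> l1 * p1 + l2 * p2 + l3 * p3)"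

lemma on_line_dot: "on_line l P \<longleftrightarrow> dot l P = 0"
  by (simp add: on_line_def dot_def split: prod.splits)

lemma dot_lin: "dot l (lin M P) = dot (lt M l) P"
  by (auto simp: dot_def lin_def lt_def split: prod.splits) (simp add: algebra_simps)

lemma dot_ext: "(\<And>V. dot l V = dot l' V) \<Longrightarrow> l = l'"
proof -
  assume h: "\<And>V. dot l V = dot l' V"
  obtain a b c where l: "l = (a, b, c)" by (cases l)
  obtain a' b' c' where l': "l' = (a', b', c')" by (cases l')
  have "a = a'" using h[of "(1, 0, 0)"] by (simp add: dot_def l l')
  moreover have "b = b'" using h[of "(0, 1, 0)"] by (simp add: dot_def l l')
  moreover have "c = c'" using h[of "(0, 0, 1)"] by (simp add: dot_def l l')
  ultimately show ?thesis by (simp add: l l')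
qed

lemma lt_lt_inv:
  assumes "\<And>V. lin N (lin M V) = V" shows "lt M (lt N l) = l"
  by (rule dot_ext) (simp add: dot_lin[symmetric] assms)

lemma lin_padd: "lin M (padd P t R) = padd (lin M P) t (lin M R)"
  by (auto simp: lin_def padd_def split: prod.splits) (simp_all add: algebra_simps)

lemma lin_zero: "lin M (0, 0, 0) = (0, 0, 0)"
  by (simp add: lin_def)

lemma lin_dep:
  fixes N :: "nat \<Rightarrow> nat \<Rightarrow> 'a::comm_ring_1"
  assumes "\<not> indep3 A B" shows "\<not> indep3 (lin N A) (lin N B)"
proof -
  obtain a1 a2 a3 where A: "A = (a1, a2, a3)" by (cases A)
  obtain b1 b2 b3 where B: "B = (b1, b2, b3)" by (cases B)
  have z: "a2 * b3 - a3 * b2 = 0" "a3 * b1 - a1 * b3 = 0" "a1 * b2 - a2 * b1 = 0"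
    using assms by (auto simp: indep3_def A B)
  have g: "(u0 * a1 + u1 * a2 + u2 * a3) * (v0 * b1 + v1 * b2 + v2 * b3) -
             (v0 * a1 + v1 * a2 + v2 * a3) * (u0 * b1 + u1 * b2 + u2 * b3) = 0" for u0 u1 u2 v0 v1 v2 :: 'a
  proof -
    have "(u0 * a1 + u1 * a2 + u2 * a3) * (v0 * b1 + v1 * b2 + v2 * b3) -
             (v0 * a1 + v1 * a2 + v2 * a3) * (u0 * b1 + u1 * b2 + u2 * b3) =
     (u0 * v1 - u1 * v0) * (a1 * b2 - a2 * b1) + (u2 * v0 - u0 * v2) * (a3 * b1 - a1 * b3)
     + (u1 * v2 - u2 * v1) * (a2 * b3 - a3 * b2)"
      by (simp add: algebra_simps)
    thus ?thesis using z by simp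
  qed
  show ?thesis unfolding indep3_def lin_def A B prod.case
    using g[of "N 1 0" "N 1 1" "N 1 2" "N 2 0" "N 2 1" "N 2 2"]
          g[of "N 2 0" "N 2 1" "N 2 2" "N 0 0" "N 0 1" "N 0 2"]
          g[of "N 0 0" "N 0 1" "N 0 2" "N 1 0" "N 1 1" "N 1 2"] by simp
qed

lemma lin_indep:
  assumes inv: "\<And>V. lin N (lin M V) = V" and "indep3 P R"
  shows "indep3 (lin M P) (lin M R)"
  using lin_dep[of "lin M P" "lin M R" N] assms by auto

lemma lin_nz:
  assumes inv: "\<And>V. lin N (lin M V) = V" and "P \<noteq> (0, 0, 0)"
  shows "lin M P \<noteq> (0, 0, 0)"
  using assms lin_zero by metis

lemma tpoly_lin:
  fixes c :: "nat \<Rightarrow> nat \<Rightarrow> 'a::alg_closed_field"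
  assumes eq: "\<And>V. ev 4 c1 V = ev 4 c (lin M V)"
  shows "tpoly 4 c1 P R = tpoly 4 c (lin M P) (lin M R)"
  by (rule poly_eq_alg_closed) (simp add: poly_tpoly eq lin_padd)

lemma contact_lin:
  fixes c :: "nat \<Rightarrow> nat \<Rightarrow> 'a::alg_closed_field"
  assumes eq: "\<And>V. ev 4 c1 V = ev 4 c (lin M V)"
    and inv: "\<And>V. lin N (lin M V) = V"
    and C: "contact c1 l P m"
  shows "contact c (lt N l) (lin M P) m"
proof -
  have ol: "on_line (lt N l) (lin M Q) \<longleftrightarrow> on_line l Q" for Q
    by (simp add: on_line_dot dot_lin[symmetric] inv)
  from C obtain R where R: "on_line l R" "indep3 P R" "tpoly 4 c1 P R \<noteq> 0" "m \<le> order 0 (tpoly 4 c1 P R)"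
    and oP: "on_line l P" unfolding contact_def by blast
  show ?thesis unfolding contact_def
    using R oP ol lin_indep[OF inv R(2)] tpoly_lin[OF eq, of P R] by metis
qed

lemma bit_lin:
  fixes c :: "nat \<Rightarrow> nat \<Rightarrow> 'a::alg_closed_field"
  assumes eq: "\<And>V. ev 4 c1 V = ev 4 c (lin M V)"
    and inv1: "\<And>V. lin N (lin M V) = V" and inv2: "\<And>V. lin M (lin N V) = V"
    and B: "bit c1 l"
  shows "bit c (lt N l)"
proof -
  have lnz: "lt N l \<noteq> (0, 0, 0)"
  proof
    assume "lt N l = (0, 0, 0)"
    hence "lt M (lt N l) = (0, 0, 0)" by (simp add: lt_def)
    hence "l = (0, 0, 0)" using lt_lt_inv[where M=M and N=N and l=l] inv1 by simp
    thus False using B by (simp add: bit_def)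
  qed
  from B consider (two) P Q where "contact c1 l P 2" "contact c1 l Q 2" "indep3 P Q"
    | (four) P where "P \<noteq> (0, 0, 0)" "contact c1 l P 4" unfolding bit_def by blast
  thus ?thesis
  proof cases
    case two
    thus ?thesis unfolding bit_def using lnz contact_lin[OF eq inv1] lin_indep[OF inv1] by blast
  next
    case four
    thus ?thesis unfolding bit_def using lnz contact_lin[OF eq inv1] lin_nz[OF inv1] by blast
  qed
qed

lemma nat_sub_aux: "(a::nat) - b = k \<Longrightarrow> b < c \<Longrightarrow> c \<le> a \<Longrightarrow> a - c < k"
  by linarith

lemma card_pow2_aux:
  assumes two: "(2::'k::{finite, comm_ring_1}) = 0"
  shows "\<forall>(G::'k set) n. 0 \<in> G \<longrightarrow> (\<forall>x\<in>G. \<forall>y\<in>G. x + y \<in> G) \<longrightarrow> card G = 2 ^ n \<longrightarrow>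
           card (UNIV :: 'k set) - card G = k \<longrightarrow> (\<exists>r. card (UNIV :: 'k set) = 2 ^ r)"
proof (induction k rule: less_induct)
  case (less k)
  show ?case
  proof (intro allI impI)
    fix G :: "'k set" and n
    assume G0: "0 \<in> G" and Gc: "\<forall>x\<in>G. \<forall>y\<in>G. x + y \<in> G" and Gn: "card G = 2 ^ n"
      and Gk: "card (UNIV :: 'k set) - card G = k"
    show "\<exists>r. card (UNIV :: 'k set) = 2 ^ r"
    proof (cases "G = UNIV")
      case True thus ?thesis using Gn by auto
    next
      case False
      then obtain a where a: "a \<notin> G" by auto
      have xx: "x + x = 0" for x :: 'k by (metis mult_2 mult_zero_left two)
      define G' where "G' = G \<union> (\<lambda>x. x + a) ` G"
      have disj: "G \<inter> (\<lambda>x. x + a) ` G = {}"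
      proof (rule ccontr)
        assume "G \<inter> (\<lambda>x. x + a) ` G \<noteq> {}"
        then obtain x where x: "x \<in> G" "x + a \<in> G" by auto
        have "x + (x + a) = a" by (metis add.assoc add_0 xx)
        thus False using Gc x a by metis
      qed
      have inj: "inj_on (\<lambda>x. x + a) G" by (auto simp: inj_on_def)
      have cG': "card G' = 2 ^ Suc n"
        unfolding G'_def using disj inj Gn by (simp add: card_Un_disjoint card_image)
      have G'0: "0 \<in> G'" using G0 by (simp add: G'_def)
      have G'c: "\<forall>x\<in>G'. \<forall>y\<in>G'. x + y \<in> G'"
      proof (intro ballI)
        fix x y assume "x \<in> G'" "y \<in> G'"
        then consider "x \<in> G" "y \<in> G" | u where "x \<in> G" "u \<in> G" "y = u + a"
          | u where "u \<in> G" "x = u + a" "y \<in> G" | u v where "u \<in> G" "v \<in> G" "x = u + a" "y = v + a"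
          unfolding G'_def by auto
        thus "x + y \<in> G'"
        proof cases
          case 1
          hence "x + y \<in> G" using Gc by blast
          thus ?thesis by (simp add: G'_def)
        next
          case (2 u)
          have e: "x + y = (x + u) + a" using 2 by (simp add: add.assoc)
          have "x + u \<in> G" using Gc 2 by blast
          hence "(x + u) + a \<in> (\<lambda>x. x + a) ` G" by (rule imageI)
          thus ?thesis unfolding G'_def e by blast
        next
          case (3 u)
          have e: "x + y = (u + y) + a" using 3 by (simp add: add_ac)
          have "u + y \<in> G" using Gc 3 by blast
          hence "(u + y) + a \<in> (\<lambda>x. x + a) ` G" by (rule imageI)
          thus ?thesis unfolding G'_def e by blast
        next
          case (4 u v)
          have "x + y = u + v + (a + a)" using 4 by (simp add: add_ac)
          hence e: "x + y = u + v" using xx by simp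
          have "u + v \<in> G" using Gc 4 by blast
          thus ?thesis unfolding G'_def e by blast
        qed
      qed
      have c1: "card G < card G'" unfolding cG' Gn by simp
      have c2: "card G' \<le> card (UNIV :: 'k set)" by (rule card_mono) auto
      have lt: "card (UNIV :: 'k set) - card G' < k" using nat_sub_aux[OF Gk c1 c2] .
      note H = less.IH[OF lt, THEN spec[of _ G'], THEN spec[of _ "Suc n"]]
      show ?thesis using H G'0 G'c cG' by simp
    qed
  qed
qed

lemma card_pow2:
  assumes two: "(2::'k::{finite, comm_ring_1}) = 0"
  shows "\<exists>r. card (UNIV :: 'k set) = 2 ^ r"
proof -
  have "0 \<in> {0::'k} \<longrightarrow> (\<forall>x\<in>{0::'k}. \<forall>y\<in>{0}. x + y \<in> {0}) \<longrightarrow> card {0::'k} = 2 ^ 0 \<longrightarrow>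
           card (UNIV :: 'k set) - card {0::'k} = card (UNIV :: 'k set) - 1 \<longrightarrow> (\<exists>r. card (UNIV :: 'k set) = 2 ^ r)"
    using card_pow2_aux[OF two, of "card (UNIV :: 'k set) - 1", THEN spec[of _ "{0}"], THEN spec[of _ 0]] .
  thus ?thesis by simp
qed

lemma finite_field_pow_card:
  fixes x :: "'a :: {finite, field}"
  shows "x ^ card (UNIV :: 'a set) = x"
proof (cases "x = 0")
  case False
  have "x * (\<Prod>y\<in>UNIV-{0}. x * y) = x * x ^ (card (UNIV :: 'a set) - 1) * \<Prod>(UNIV-{0})"
    by (simp add: prod.distrib mult_ac)
  also have "x * x ^ (card (UNIV :: 'a set) - 1) = x ^ Suc (card (UNIV :: 'a set) - 1)"
    by (subst power_Suc) auto
  also have "Suc (card (UNIV :: 'a set) - 1) = card (UNIV :: 'a set)"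
    using finite_UNIV_card_ge_0[where ?'a = 'a] by simp
  also have "(\<Prod>y\<in>UNIV-{0}. x * y) = (\<Prod>y\<in>UNIV-{0}. y)"
    by (rule prod.reindex_bij_witness[of _ "\<lambda>y. y / x" "\<lambda>y. x * y"]) (use False in auto)
  finally show ?thesis
    by simp
qed (use finite_UNIV_card_ge_0[where ?'a = 'a] in auto)

definition frob :: "'k::{finite, field} alg_closure \<Rightarrow> 'k alg_closure" where
  "frob x = x ^ card (UNIV :: 'k set)"

definition frob3 :: "'k::{finite, field} alg_closure \<times> 'k alg_closure \<times> 'k alg_closure \<Rightarrow> 'k alg_closure \<times> 'k alg_closure \<times> 'k alg_closure" where
  "frob3 P = (case P of (x, y, z) \<Rightarrow> (frob x, frob y, frob z))"

context
  assumes char2: "CHAR('k::{finite, field}) = 2"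
begin

lemma frob_add: "frob (x + y :: 'k alg_closure) = frob x + frob y"
proof -
  have "(2::'k) = 0" by (rule c2_two[OF char2])
  then obtain r where r: "card (UNIV :: 'k set) = 2 ^ r" using card_pow2 by blast
  have "prime CHAR('k alg_closure)" using char2 by simp
  moreover have "card (UNIV :: 'k set) = CHAR('k alg_closure) ^ r" using r char2 by simp
  ultimately show ?thesis unfolding frob_def by (rule freshmans_dream')
qed

lemma frob_0: "frob (0 :: 'k alg_closure) = 0"
  using finite_UNIV_card_ge_0[where ?'a = 'k] by (simp add: frob_def)

lemma frob_1: "frob (1 :: 'k alg_closure) = 1"
  by (simp add: frob_def)

lemma frob_mult: "frob (x * y :: 'k alg_closure) = frob x * frob y"
  by (simp add: frob_def power_mult_distrib)

lemma frob_power: "frob (x ^ n :: 'k alg_closure) = frob x ^ n"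
  by (simp add: frob_def power_mult[symmetric] mult.commute)

lemma frob_neg: "frob (- x :: 'k alg_closure) = - frob x"
proof -
  have "frob x + frob (-x) = 0" using frob_add[of x "-x"] frob_0 by simp
  from add.inverse_unique[OF this] show ?thesis by simp
qed

lemma frob_diff: "frob (x - y :: 'k alg_closure) = frob x - frob y"
  using frob_add[of x "-y"] frob_neg[of y] by simp

lemma frob_eq_0: "frob (x :: 'k alg_closure) = 0 \<longleftrightarrow> x = 0"
  using finite_UNIV_card_ge_0[where ?'a = 'k] by (simp add: frob_def)

lemma frob_inj: "inj (frob :: 'k alg_closure \<Rightarrow> _)"
  by (rule injI) (metis frob_diff frob_eq_0 right_minus_eq)

lemma frob_divide: "frob (x / y :: 'k alg_closure) = frob x / frob y"
  by (simp add: frob_def power_divide)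

lemma frob_to_ac: "frob (to_ac a) = to_ac (a :: 'k)"
  by (simp add: frob_def finite_field_pow_card flip: to_ac_power)

lemma frob_fixed:
  assumes "frob x = (x :: 'k alg_closure)" shows "x \<in> range to_ac"
proof (rule ccontr)
  assume nx: "x \<notin> range to_ac"
  define q where "q = card (UNIV :: 'k set)"
  have "card {0::'k, 1} \<le> card (UNIV :: 'k set)" by (rule card_mono) auto
  hence q2: "q \<ge> 2" unfolding q_def by simp
  define p :: "'k alg_closure poly" where "p = monom 1 q - [:0, 1:]"
  have dp: "degree p = q" unfolding p_def diff_conv_add_uminus
    by (subst degree_add_eq_left) (use q2 in \<open>simp_all add: degree_monom_eq\<close>)
  hence pnz: "p \<noteq> 0" using q2 by auto
  have roots: "poly p y = 0 \<longleftrightarrow> frob y = y" for y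
    by (simp add: p_def poly_monom frob_def q_def)
  have sub: "insert x (range to_ac) \<subseteq> {y. poly p y = 0}"
    using assms by (auto simp: roots frob_to_ac)
  have "card (insert x (range (to_ac :: 'k \<Rightarrow> _))) = Suc q"
    using nx by (simp add: card_image inj_to_ac q_def)
  moreover have "card (insert x (range (to_ac :: 'k \<Rightarrow> _))) \<le> card {y. poly p y = 0}"
    by (rule card_mono[OF poly_roots_finite[OF pnz] sub])
  moreover have "card {y. poly p y = 0} \<le> q" using card_poly_roots_bound[OF pnz] dp by simp
  ultimately show False by simp
qed

lemma frob_sum: "frob (sum f A :: 'k alg_closure) = (\<Sum>i\<in>A. frob (f i))"
  by (induct A rule: infinite_finite_induct) (simp_all add: frob_0 frob_add)

lemma frob_tform:
  "frob (tform_eval d (ac_form F) x y z) = tform_eval d (ac_form (F :: nat \<Rightarrow> nat \<Rightarrow> 'k)) (frob x) (frob y) (frob z)"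
  by (simp add: tform_eval_def frob_sum frob_mult frob_power ac_form_def frob_to_ac)

lemma poly_map_frob: "poly (map_poly frob p) (frob t) = frob (poly p (t :: 'k alg_closure))"
  by (induct p) (simp_all add: map_poly_pCons frob_0 frob_add frob_mult)

lemma tpoly_frob:
  "tpoly 4 (ac_form (F :: nat \<Rightarrow> nat \<Rightarrow> 'k)) (frob3 P) (frob3 R) = map_poly frob (tpoly 4 (ac_form F) P R)"
proof (rule poly_eq_on_infinite)
  show "infinite (range (frob :: 'k alg_closure \<Rightarrow> _))"
    using alg_closed_infinite frob_inj finite_imageD by blast
  fix t assume "t \<in> range (frob :: 'k alg_closure \<Rightarrow> _)"
  then obtain s where s: "t = frob s" by auto
  have "padd (frob3 P) (frob s) (frob3 R) = frob3 (padd P s R)"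
    by (auto simp: padd_def frob3_def frob_add frob_mult split: prod.splits)
  thus "poly (tpoly 4 (ac_form F) (frob3 P) (frob3 R)) t = poly (map_poly frob (tpoly 4 (ac_form F) P R)) t"
    by (simp add: s poly_tpoly poly_map_frob ev_def frob3_def frob_tform split: prod.splits)
qed

lemma coeff_map_frob: "coeff (map_poly frob p) i = frob (coeff p i :: 'k alg_closure)"
  by (simp add: coeff_map_poly frob_0)

lemma on_line_frob: assumes "on_line l P" shows "on_line (frob3 l) (frob3 P :: 'k alg_closure \<times> _ \<times> _)"
proof -
  obtain l1 l2 l3 where L: "l = (l1, l2, l3)" by (cases l)
  obtain p1 p2 p3 where P: "P = (p1, p2, p3)" by (cases P)
  have "frob (l1 * p1 + l2 * p2 + l3 * p3) = frob l1 * frob p1 + frob l2 * frob p2 + frob l3 * frob p3"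
    by (simp add: frob_add frob_mult)
  thus ?thesis using assms by (simp add: on_line_def L P frob3_def frob_0)
qed

lemma frob_cross: "frob (a * b - c * d) = frob a * frob b - frob c * frob (d :: 'k alg_closure)"
  by (simp add: frob_diff frob_mult)

lemma indep3_frob: assumes "indep3 P R" shows "indep3 (frob3 P) (frob3 R :: 'k alg_closure \<times> _ \<times> _)"
proof -
  obtain r1 r2 r3 where R: "R = (r1, r2, r3)" by (cases R)
  obtain p1 p2 p3 where P: "P = (p1, p2, p3)" by (cases P)
  show ?thesis using assms unfolding indep3_def P R frob3_def prod.case
    by (simp only: frob_cross[symmetric] frob_eq_0 prod.inject) simp
qed

lemma frob3_nz: "P \<noteq> (0, 0, 0) \<Longrightarrow> frob3 P \<noteq> (0, 0, 0 :: 'k alg_closure)"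
  by (auto simp: frob3_def frob_eq_0 split: prod.splits)

lemma contact_frob:
  assumes "contact (ac_form (F :: nat \<Rightarrow> nat \<Rightarrow> 'k)) l P m"
  shows "contact (ac_form F) (frob3 l) (frob3 P) m"
proof -
  from assms obtain R where R: "on_line l R" "indep3 P R" "tpoly 4 (ac_form F) P R \<noteq> 0"
      "m \<le> order 0 (tpoly 4 (ac_form F) P R)" and oP: "on_line l P" unfolding contact_def by blast
  define p where "p = tpoly 4 (ac_form F) P R"
  have nz: "map_poly frob p \<noteq> 0"
  proof
    assume "map_poly frob p = 0"
    hence "\<forall>i. frob (coeff p i) = 0" by (metis coeff_0 coeff_map_frob)
    hence "p = 0" by (simp add: frob_eq_0 poly_eq_iff)
    thus False using R(3) p_def by simp
  qed
  have "\<forall>k<m. coeff p k = 0" using order_ge_iff[OF R(3)] R(4) unfolding p_def by blast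
  hence "\<forall>k<m. coeff (map_poly frob p) k = 0" by (simp add: coeff_map_frob frob_0)
  hence o: "m \<le> order 0 (map_poly frob p)" using order_ge_iff[OF nz] by blast
  have t: "tpoly 4 (ac_form F) (frob3 P) (frob3 R) = map_poly frob p" by (simp add: tpoly_frob p_def)
  have "on_line (frob3 l) (frob3 R) \<and> indep3 (frob3 P) (frob3 R) \<and>
     tpoly 4 (ac_form F) (frob3 P) (frob3 R) \<noteq> 0 \<and> m \<le> order 0 (tpoly 4 (ac_form F) (frob3 P) (frob3 R))"
    unfolding t using on_line_frob[OF R(1)] indep3_frob[OF R(2)] o nz by simp
  thus ?thesis unfolding contact_def using on_line_frob[OF oP] by blast
qed

lemma bit_frob:
  assumes "bit (ac_form (F :: nat \<Rightarrow> nat \<Rightarrow> 'k)) l"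
  shows "bit (ac_form F) (frob3 l)"
proof -
  have lnz: "frob3 l \<noteq> (0, 0, 0)" using assms frob3_nz by (simp add: bit_def)
  from assms consider (two) P Q where "contact (ac_form F) l P 2" "contact (ac_form F) l Q 2" "indep3 P Q"
    | (four) P where "P \<noteq> (0, 0, 0)" "contact (ac_form F) l P 4" unfolding bit_def by blast
  thus ?thesis
  proof cases
    case two
    show ?thesis unfolding bit_def
      by (intro conjI disjI1 exI[of _ "frob3 P"] exI[of _ "frob3 Q"] lnz contact_frob[OF two(1)]
          contact_frob[OF two(2)] indep3_frob[OF two(3)])
  next
    case four
    show ?thesis unfolding bit_def
      by (intro conjI disjI2 exI[of _ "frob3 P"] lnz contact_frob[OF four(2)] frob3_nz[OF four(1)])
  qed
qed


lemma ratio_rational: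
  assumes "frob x = \<mu> * x" "frob k = \<mu> * k" "k \<noteq> (0 :: 'k alg_closure)"
  shows "x / k \<in> range (to_ac :: 'k \<Rightarrow> _)"
proof -
  have "\<mu> \<noteq> 0" using assms(2,3) frob_eq_0 by force
  hence "frob (x / k) = x / k" using assms by (simp add: frob_divide)
  thus ?thesis by (rule frob_fixed)
qed

lemma rational_line:
  assumes B: "bit (ac_form (F :: nat \<Rightarrow> nat \<Rightarrow> 'k)) l"
    and U: "\<forall>l'. bit (ac_form F) l' \<longrightarrow> (\<exists>\<mu>. l' = (\<mu> * fst l, \<mu> * fst (snd l), \<mu> * snd (snd l)))"
  shows "\<exists>\<kappa> m1 m2 m3. \<kappa> \<noteq> 0 \<and> (m1, m2, m3) \<noteq> (0, 0, 0) \<and>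
            l = (\<kappa> * to_ac m1, \<kappa> * to_ac m2, \<kappa> * to_ac m3)"
proof -
  obtain a b c where l: "l = (a, b, c)" by (cases l)
  have lnz: "l \<noteq> (0, 0, 0)" using B by (simp add: bit_def)
  obtain \<mu> where mu0: "frob3 l = (\<mu> * fst l, \<mu> * fst (snd l), \<mu> * snd (snd l))"
    using U bit_frob[OF B] by blast
  hence mu: "frob3 l = (\<mu> * a, \<mu> * b, \<mu> * c)" by (simp add: l)
  hence fa: "frob a = \<mu> * a" and fb: "frob b = \<mu> * b" and fc: "frob c = \<mu> * c"
    by (simp_all add: frob3_def l)
  obtain k where k: "k \<noteq> 0" "frob k = \<mu> * k" "k = a \<or> k = b \<or> k = c"
    using lnz fa fb fc l by blast
  define m1 where "m1 = of_ac (a / k)"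
  define m2 where "m2 = of_ac (b / k)"
  define m3 where "m3 = of_ac (c / k)"
  have e1: "to_ac m1 = a / k" unfolding m1_def by (rule to_ac_of_ac[OF ratio_rational[OF fa k(2,1)]])
  have e2: "to_ac m2 = b / k" unfolding m2_def by (rule to_ac_of_ac[OF ratio_rational[OF fb k(2,1)]])
  have e3: "to_ac m3 = c / k" unfolding m3_def by (rule to_ac_of_ac[OF ratio_rational[OF fc k(2,1)]])
  have "(m1, m2, m3) \<noteq> (0, 0, 0)"
  proof
    assume "(m1, m2, m3) = (0, 0, 0)"
    hence "a / k = 0" "b / k = 0" "c / k = 0" using e1 e2 e3 by (metis prod.inject to_ac_0)+
    thus False using k by auto
  qed
  moreover have "l = (k * to_ac m1, k * to_ac m2, k * to_ac m3)" using k(1) by (simp add: e1 e2 e3 l)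
  ultimately show ?thesis using k(1) by blast
qed

end

inductive FF :: "nat \<Rightarrow> ('k::field alg_closure \<Rightarrow> 'k alg_closure \<Rightarrow> 'k alg_closure \<Rightarrow> 'k alg_closure) \<Rightarrow> bool"
  for d where
  FF_zero: "FF d (\<lambda>x y z. 0)"
| FF_mono: "i + j \<le> d \<Longrightarrow> FF d (\<lambda>x y z. to_ac a * x ^ i * y ^ j * z ^ (d - i - j))"
| FF_add: "FF d f \<Longrightarrow> FF d g \<Longrightarrow> FF d (\<lambda>x y z. f x y z + g x y z)"

lemma FF_cong: "FF d f \<Longrightarrow> (\<And>x y z. f x y z = g x y z) \<Longrightarrow> FF d g"
proof -
  assume "FF d f" "\<And>x y z. f x y z = g x y z"
  moreover have "f = g" using calculation(2) by (intro ext) 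
  ultimately show ?thesis by simp
qed

lemma tform_add_coeff:
  "tform_eval d (ac_form (\<lambda>i j. c1 i j + c2 i j)) x y z = tform_eval d (ac_form c1) x y z + tform_eval d (ac_form c2) x y z"
  by (simp add: tform_eval_def ac_form_def sum.distrib[symmetric] algebra_simps)

lemma tform_single:
  assumes "i + j \<le> d"
  shows "tform_eval d (ac_form (\<lambda>i' j'. if i' = i \<and> j' = j then a else 0)) x y z = to_ac a * x ^ i * y ^ j * z ^ (d - i - j)"
proof -
  have "tform_eval d (ac_form (\<lambda>i' j'. if i' = i \<and> j' = j then a else 0)) x y z =
        (\<Sum>i'\<le>d. \<Sum>j'\<le>d - i'. if i' = i \<and> j' = j then to_ac a * x ^ i' * y ^ j' * z ^ (d - i' - j') else 0)"
    unfolding tform_eval_def ac_form_def by (intro sum.cong refl) auto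
  also have "\<dots> = (\<Sum>i'\<le>d. if i' = i then to_ac a * x ^ i * y ^ j * z ^ (d - i - j) else 0)"
  proof (intro sum.cong refl)
    fix i' assume "i' \<in> {..d}"
    show "(\<Sum>j'\<le>d - i'. if i' = i \<and> j' = j then to_ac a * x ^ i' * y ^ j' * z ^ (d - i' - j') else 0) =
          (if i' = i then to_ac a * x ^ i * y ^ j * z ^ (d - i - j) else 0)"
    proof (cases "i' = i")
      case True
      thus ?thesis using assms by (simp add: sum.delta')
    qed simp
  qed
  also have "\<dots> = to_ac a * x ^ i * y ^ j * z ^ (d - i - j)"
    using assms by (simp add: sum.delta')
  finally show ?thesis .
qed

lemma FF_rep: "FF d f \<Longrightarrow> \<exists>c :: nat \<Rightarrow> nat \<Rightarrow> 'k::field. \<forall>x y z. f x y z = tform_eval d (ac_form c) x y z"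
proof (induction rule: FF.induct)
  case FF_zero
  show ?case by (rule exI[of _ "\<lambda>i j. 0"]) (simp add: tform_eval_def ac_form_def)
next
  case (FF_mono i j a)
  show ?case by (rule exI[of _ "\<lambda>i' j'. if i' = i \<and> j' = j then a else 0"]) (simp add: tform_single FF_mono)
next
  case (FF_add f g)
  then obtain c1 c2 where "\<forall>x y z. f x y z = tform_eval d (ac_form c1) x y z"
      "\<forall>x y z. g x y z = tform_eval d (ac_form c2) x y z" by blast
  thus ?case by (intro exI[of _ "\<lambda>i j. c1 i j + c2 i j"]) (simp add: tform_add_coeff)
qed

lemma FF_sum: "finite A \<Longrightarrow> (\<And>i. i \<in> A \<Longrightarrow> FF d (f i)) \<Longrightarrow> FF d (\<lambda>x y z. \<Sum>i\<in>A. f i x y z)"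
proof (induction A rule: finite_induct)
  case empty thus ?case by (simp add: FF_zero)
next
  case (insert a A)
  have "FF d (\<lambda>x y z. f a x y z + (\<Sum>i\<in>A. f i x y z))"
    using insert by (intro FF_add) auto
  thus ?case by (rule FF_cong) (use insert in simp)
qed

lemma FF_mono_mult:
  assumes "i + j \<le> d1" "i' + j' \<le> d2"
  shows "FF (d1 + d2) (\<lambda>x y z. (to_ac a * x ^ i * y ^ j * z ^ (d1 - i - j)) * (to_ac a' * x ^ i' * y ^ j' * z ^ (d2 - i' - j')))"
proof (rule FF_cong[OF FF_mono[of "i + i'" "j + j'" "d1 + d2" "a * a'"]])
  show "i + i' + (j + j') \<le> d1 + d2" using assms by simp
  fix x y z :: "'a alg_closure"
  have "d1 + d2 - (i + i') - (j + j') = (d1 - i - j) + (d2 - i' - j')" using assms by simp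
  thus "to_ac (a * a') * x ^ (i + i') * y ^ (j + j') * z ^ (d1 + d2 - (i + i') - (j + j')) =
        (to_ac a * x ^ i * y ^ j * z ^ (d1 - i - j)) * (to_ac a' * x ^ i' * y ^ j' * z ^ (d2 - i' - j'))"
    by (simp add: power_add mult_ac)
qed

lemma FF_mult: "FF d1 f \<Longrightarrow> FF d2 g \<Longrightarrow> FF (d1 + d2) (\<lambda>x y z. f x y z * g x y z)"
proof (induction rule: FF.induct)
  case FF_zero
  show ?case by (rule FF_cong[OF FF.FF_zero]) simp
next
  case (FF_mono i j a)
  from FF_mono.prems FF_mono.hyps show ?case
  proof (induction rule: FF.induct)
    case FF_zero show ?case by (rule FF_cong[OF FF.FF_zero]) simp
  next
    case (FF_mono i' j' a')
    show ?case by (rule FF_mono_mult) (use FF_mono in auto)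
  next
    case (FF_add g1 g2)
    have "FF (d1 + d2) (\<lambda>x y z. (to_ac a * x ^ i * y ^ j * z ^ (d1 - i - j)) * g1 x y z +
                                (to_ac a * x ^ i * y ^ j * z ^ (d1 - i - j)) * g2 x y z)"
      using FF_add by (intro FF.FF_add) auto
    thus ?case by (rule FF_cong) (simp add: algebra_simps)
  qed
next
  case (FF_add f1 f2)
  have "FF (d1 + d2) (\<lambda>x y z. f1 x y z * g x y z + f2 x y z * g x y z)"
    using FF_add by (intro FF.FF_add) auto
  thus ?case by (rule FF_cong) (simp add: algebra_simps)
qed

lemma FF_const: "FF 0 (\<lambda>x y z. to_ac a)"
  by (rule FF_cong[OF FF_mono[of 0 0 0 a]]) simp_all

lemma FF_lin: "FF 1 (\<lambda>x y z. to_ac a * x + to_ac b * y + to_ac c * z)"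
proof -
  have "FF 1 (\<lambda>x y z. to_ac a * x ^ 1 * y ^ 0 * z ^ (1 - 1 - 0) + to_ac b * x ^ 0 * y ^ 1 * z ^ (1 - 0 - 1)
                   + to_ac c * x ^ 0 * y ^ 0 * z ^ (1 - 0 - 0))"
    by (intro FF_add FF_mono) simp_all
  thus ?thesis by (rule FF_cong) simp
qed

lemma FF_pow: "FF 1 f \<Longrightarrow> FF n (\<lambda>x y z. f x y z ^ n)"
proof (induction n)
  case 0
  show ?case by (rule FF_cong[OF FF_const[of 1]]) simp
next
  case (Suc n)
  have "FF (1 + n) (\<lambda>x y z. f x y z * f x y z ^ n)" using Suc by (intro FF_mult) auto
  thus ?case by simp
qed

definition linK :: "(nat \<Rightarrow> nat \<Rightarrow> 'k::field) \<Rightarrow> nat \<Rightarrow> 'k alg_closure \<Rightarrow> 'k alg_closure \<Rightarrow> 'k alg_closure \<Rightarrow> 'k alg_closure" where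
  "linK M r x y z = to_ac (M r 0) * x + to_ac (M r 1) * y + to_ac (M r 2) * z"

lemma FF_compose:
  "FF 4 (\<lambda>x y z. tform_eval 4 (ac_form c) (linK M 0 x y z) (linK M 1 x y z) (linK M 2 x y z))"
proof -
  have t: "FF 4 (\<lambda>x y z. ac_form c i j * linK M 0 x y z ^ i * linK M 1 x y z ^ j * linK M 2 x y z ^ (4 - i - j))"
    if ij: "i \<le> 4" "j \<le> 4 - i" for i j :: nat
  proof -
    have "FF (0 + i + j + (4 - i - j)) (\<lambda>x y z. to_ac (c i j) * linK M 0 x y z ^ i * linK M 1 x y z ^ j * linK M 2 x y z ^ (4 - i - j))"
      unfolding linK_def by (intro FF_mult FF_const FF_pow FF_lin)
    moreover have "0 + i + j + (4 - i - j) = 4" using ij by simp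
    ultimately show ?thesis by (simp add: ac_form_def)
  qed
  show ?thesis unfolding tform_eval_def
    by (intro FF_sum finite_atMost t) auto
qed

lemma compose_rep:
  "\<exists>c1 :: nat \<Rightarrow> nat \<Rightarrow> 'k::field. \<forall>x y z. tform_eval 4 (ac_form c1) x y z =
      tform_eval 4 (ac_form c) (linK M 0 x y z) (linK M 1 x y z) (linK M 2 x y z)"
  using FF_rep[OF FF_compose[of c M]] by metis

definition mat3 :: "'a \<Rightarrow> 'a \<Rightarrow> 'a \<Rightarrow> 'a \<Rightarrow> 'a \<Rightarrow> 'a \<Rightarrow> 'a \<Rightarrow> 'a \<Rightarrow> 'a \<Rightarrow> nat \<Rightarrow> nat \<Rightarrow> 'a" where
  "mat3 a b c d e f g h i = (\<lambda>r s. if r = 0 then (if s = 0 then a else if s = 1 then b else c)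
      else if r = 1 then (if s = 0 then d else if s = 1 then e else f)
      else (if s = 0 then g else if s = 1 then h else i))"

lemma mat3_simps [simp]:
  "mat3 a b c d e f g h i 0 0 = a" "mat3 a b c d e f g h i 0 1 = b" "mat3 a b c d e f g h i 0 2 = c"
  "mat3 a b c d e f g h i 1 0 = d" "mat3 a b c d e f g h i 1 1 = e" "mat3 a b c d e f g h i 1 2 = f"
  "mat3 a b c d e f g h i 2 0 = g" "mat3 a b c d e f g h i 2 1 = h" "mat3 a b c d e f g h i 2 2 = i"
  by (simp_all add: mat3_def)

definition mmul :: "(nat \<Rightarrow> nat \<Rightarrow> 'a::comm_ring_1) \<Rightarrow> (nat \<Rightarrow> nat \<Rightarrow> 'a) \<Rightarrow> nat \<Rightarrow> nat \<Rightarrow> 'a" where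
  "mmul M N i j = M i 0 * N 0 j + M i 1 * N 1 j + M i 2 * N 2 j"

definition isId :: "(nat \<Rightarrow> nat \<Rightarrow> 'a::comm_ring_1) \<Rightarrow> bool" where
  "isId M \<longleftrightarrow> M 0 0 = 1 \<and> M 0 1 = 0 \<and> M 0 2 = 0 \<and> M 1 0 = 0 \<and> M 1 1 = 1 \<and> M 1 2 = 0 \<and>
     M 2 0 = 0 \<and> M 2 1 = 0 \<and> M 2 2 = 1"

definition acM :: "(nat \<Rightarrow> nat \<Rightarrow> 'k::field) \<Rightarrow> nat \<Rightarrow> nat \<Rightarrow> 'k alg_closure" where
  "acM M i j = to_ac (M i j)"

lemma lin_mmul: "lin (mmul M N) V = lin M (lin N V)"
  by (auto simp: lin_def mmul_def split: prod.splits) (simp_all add: algebra_simps)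

lemma lin_id: "isId M \<Longrightarrow> lin M V = V"
  by (auto simp: lin_def isId_def split: prod.splits)

lemma acM_mmul: "mmul (acM M) (acM N) = acM (mmul M N)"
  by (simp add: mmul_def acM_def fun_eq_iff)

lemma isId_acM: "isId M \<Longrightarrow> isId (acM M)"
  by (simp add: isId_def acM_def)

lemma det_mmul: "det3 (mmul M N) = det3 M * det3 N"
  unfolding det3_def mmul_def by (simp add: algebra_simps)

lemma isId_det: "isId M \<Longrightarrow> det3 M = 1"
  by (simp add: isId_def det3_def)

lemma inv_det: "isId (mmul M N) \<Longrightarrow> det3 (M :: nat \<Rightarrow> nat \<Rightarrow> 'a::field) \<noteq> 0"
  using det_mmul[of M N] isId_det by force

lemma lin_acM: "lin (acM M) (x, y, z) = (linK M 0 x y z, linK M 1 x y z, linK M 2 x y z)"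
  by (simp add: lin_def acM_def linK_def)

lemma frame:
  fixes m1 m2 m3 :: "'k::field"
  assumes "(m1, m2, m3) \<noteq> (0, 0, 0)"
  shows "\<exists>M0 N0 s0. s0 \<noteq> 0 \<and> isId (mmul M0 N0) \<and> isId (mmul N0 M0) \<and>
     m1 * M0 0 0 + m2 * M0 1 0 + m3 * M0 2 0 = s0 \<and>
     m1 * M0 0 1 + m2 * M0 1 1 + m3 * M0 2 1 = 0 \<and>
     m1 * M0 0 2 + m2 * M0 1 2 + m3 * M0 2 2 = 0"
proof -
  consider (a) "m1 \<noteq> 0" | (b) "m1 = 0" "m2 \<noteq> 0" | (c) "m1 = 0" "m2 = 0" "m3 \<noteq> 0" using assms by auto
  thus ?thesis
  proof cases
    case a
    show ?thesis
      by (rule exI[of _ "mat3 1 (-m2/m1) (-m3/m1) 0 1 0 0 0 1"], rule exI[of _ "mat3 1 (m2/m1) (m3/m1) 0 1 0 0 0 1"],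
          rule exI[of _ m1]) (use a in \<open>simp add: mat3_def isId_def mmul_def field_simps\<close>)
  next
    case b
    show ?thesis
      by (rule exI[of _ "mat3 0 1 0 (1/m2) 0 (-m3/m2) 0 0 1"], rule exI[of _ "mat3 0 m2 m3 1 0 0 0 0 1"],
          rule exI[of _ 1]) (use b in \<open>simp add: mat3_def isId_def mmul_def field_simps\<close>)
  next
    case c
    show ?thesis
      by (rule exI[of _ "mat3 0 1 0 0 0 1 (1/m3) 0 0"], rule exI[of _ "mat3 0 0 m3 1 0 0 0 1 0"],
          rule exI[of _ 1]) (use c in \<open>simp add: mat3_def isId_def mmul_def field_simps\<close>)
  qed
qed

lemma frame1:
  fixes u1 u2 w1 w2 :: "'k::field"
  assumes hD: "D = u1 * w2 - u2 * w1" and nz: "D \<noteq> 0"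
  shows "isId (mmul (mat3 1 0 0 0 u1 u2 0 w1 w2) (mat3 1 0 0 0 (w2 / D) (- u2 / D) 0 (- w1 / D) (u1 / D)))"
    "isId (mmul (mat3 1 0 0 0 (w2 / D) (- u2 / D) 0 (- w1 / D) (u1 / D)) (mat3 1 0 0 0 u1 u2 0 w1 w2))"
  using nz by (simp_all add: mat3_def isId_def mmul_def field_simps) (simp_all add: hD algebra_simps)

lemma k_sqrt:
  assumes "CHAR('k::{finite, field}) = 2"
  shows "\<exists>b. b ^ 2 = (a :: 'k)"
proof -
  have two: "(2::'k) = 0" by (rule c2_two[OF assms])
  have "inj (\<lambda>x::'k. x ^ 2)"
  proof (rule injI)
    fix x y :: 'k assume "x ^ 2 = y ^ 2"
    moreover have "(x - y) ^ 2 = x ^ 2 - y ^ 2"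
      apply (simp add: eval_nat_numeral algebra_simps)
      apply (simp add: c2_bit0[OF two] c2_bit1[OF two] algebra_simps)
      done
    ultimately have "(x - y) ^ 2 = 0" by simp
    thus "x = y" by simp
  qed
  hence "surj (\<lambda>x::'k. x ^ 2)" using finite_UNIV_inj_surj finite_UNIV by blast
  thus ?thesis by (metis surjD)
qed

lemma quad_root:
  fixes A B C :: "'a::alg_closed_field"
  assumes "\<not> (A = 0 \<and> B = 0 \<and> C \<noteq> 0)"
  shows "\<exists>x. A * x^2 + B * x + C = 0"
proof (cases "A = 0 \<and> B = 0")
  case True thus ?thesis using assms by auto
next
  case False
  hence "degree [:C, B, A:] > 0" by auto
  then obtain x where "poly [:C, B, A:] x = 0" using alg_closed_imp_poly_has_root by blast
  thus ?thesis by (auto simp: algebra_simps power2_eq_square)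
qed

lemma cubic_root:
  fixes a4 a5 a6 a7 :: "'a::alg_closed_field"
  assumes "a7 \<noteq> 0"
  shows "\<exists>x. a4 + a5 * x + a6 * x^2 + a7 * x^3 = 0"
proof -
  have "degree [:a4, a5, a6, a7:] > 0" using assms by auto
  then obtain x where "poly [:a4, a5, a6, a7:] x = 0" using alg_closed_imp_poly_has_root by blast
  thus ?thesis by (auto simp: algebra_simps power2_eq_square power3_eq_cube)
qed

context
  fixes c :: "nat \<Rightarrow> nat \<Rightarrow> 'a::alg_closed_field"
  assumes two: "(2::'a) = 0" and c01: "c 0 1 = 0" and c03: "c 0 3 = 0"
begin

lemma c01': "c 0 (Suc 0) = 0" using c01 by simp
lemma c03': "c 0 (Suc (Suc (Suc 0))) = 0" using c03 by (simp add: eval_nat_numeral)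

lemma gd_L1: "gd c (0, 1, \<mu>) (1, 0, t) = c 1 3 + c 1 2 * \<mu> + c 1 1 * \<mu>^2 + c 1 0 * \<mu>^3"
  unfolding gd_def tf3 dX_def dY_def dZ_def
  apply (simp add: eval_nat_numeral algebra_simps c01 c03 c01' c03')
  apply (simp add: c2_bit0[OF two] c2_bit1[OF two] algebra_simps c01' c03')
  done

lemma gd_L2: "gd c (1, 0, t) (0, 1, \<mu>) = c 3 1 + c 2 1 * t + c 1 1 * t^2 + \<mu> * (c 3 0 + c 1 0 * t^2)"
  unfolding gd_def tf3 dX_def dY_def dZ_def
  apply (simp add: eval_nat_numeral algebra_simps c01 c03 c01' c03')
  apply (simp add: c2_bit0[OF two] c2_bit1[OF two] algebra_simps c01' c03')
  done

lemma gd_L3: "gd c (0, 0, 1) (1, t, 0) = c 1 0"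
  unfolding gd_def tf3 dX_def dY_def dZ_def
  by (simp add: c01 c01')

lemma gd_L4: "gd c (1, t, 0) (0, 0, 1) = c 3 0 + c 2 1 * t + c 1 2 * t^2"
  unfolding gd_def tf3 dX_def dY_def dZ_def
  apply (simp add: eval_nat_numeral algebra_simps c01 c03 c01' c03')
  done

lemma extra1:
  assumes char: "CHAR('a) = 2" and nl: "\<And>P R. indep3 P R \<Longrightarrow> tpoly 4 c P R \<noteq> 0"
    and e2: "c 1 3 + c 1 2 * \<mu> + c 1 1 * \<mu>^2 + c 1 0 * \<mu>^3 = 0"
    and e1: "c 3 1 + c 2 1 * t + c 1 1 * t^2 + \<mu> * (c 3 0 + c 1 0 * t^2) = 0"
  shows "bit c (t, \<mu>, 1)"
proof (rule square_bit[OF char, of _ "(0, 1, \<mu>)" "(1, 0, t)"])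
  have mm: "x + x = 0" for x :: 'a by (metis mult_2 mult_zero_left two)
  show "on_line (t, \<mu>, 1) (0, 1, \<mu>)" by (simp add: on_line_def mm)
  show "on_line (t, \<mu>, 1) (1, 0, t)" by (simp add: on_line_def mm)
  show ind: "indep3 (0, 1, \<mu>) (1, 0, t)" by (simp add: indep3_def)
  show "tpoly 4 c (0, 1, \<mu>) (1, 0, t) \<noteq> 0" by (rule nl[OF ind])
  show "coeff (tpoly 4 c (0, 1, \<mu>) (1, 0, t)) 1 = 0" unfolding coeff1_tpoly gd_L1 by (rule e2)
  show "coeff (tpoly 4 c (0, 1, \<mu>) (1, 0, t)) 3 = 0" unfolding coeff3_tpoly gd_L2 by (rule e1)
qed simp

lemma extra2:
  assumes char: "CHAR('a) = 2" and nl: "\<And>P R. indep3 P R \<Longrightarrow> tpoly 4 c P R \<noteq> 0"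
    and e2: "c 1 0 = 0"
    and e1: "c 3 0 + c 2 1 * t + c 1 2 * t^2 = 0"
  shows "bit c (t, 1, 0)"
proof (rule square_bit[OF char, of _ "(0, 0, 1)" "(1, t, 0)"])
  have mm: "x + x = 0" for x :: 'a by (metis mult_2 mult_zero_left two)
  show "on_line (t, 1, 0) (0, 0, 1)" by (simp add: on_line_def)
  show "on_line (t, 1, 0) (1, t, 0)" by (simp add: on_line_def mm)
  show ind: "indep3 (0, 0, 1) (1, t, 0)" by (simp add: indep3_def)
  show "tpoly 4 c (0, 0, 1) (1, t, 0) \<noteq> 0" by (rule nl[OF ind])
  show "coeff (tpoly 4 c (0, 0, 1) (1, t, 0)) 1 = 0" unfolding coeff1_tpoly gd_L3 by (rule e2)
  show "coeff (tpoly 4 c (0, 0, 1) (1, t, 0)) 3 = 0" unfolding coeff3_tpoly gd_L4 by (rule e1)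
qed simp

end

definition Rf :: "'a::comm_ring_1 \<Rightarrow> 'a \<Rightarrow> 'a \<Rightarrow> 'a \<Rightarrow> 'a \<Rightarrow> 'a \<Rightarrow> 'a \<Rightarrow> 'a \<Rightarrow> 'a \<Rightarrow> 'a \<Rightarrow> 'a" where
  "Rf a1 a2 a3 a4 a5 a6 a7 x y z = a1 * x^3 * y + a2 * x^3 * z + a3 * x^2 * y * z + a4 * x * y^3
      + a5 * x * y^2 * z + a6 * x * y * z^2 + a7 * x * z^3"

definition Sf :: "'a::comm_ring_1 \<Rightarrow> 'a \<Rightarrow> 'a \<Rightarrow> 'a \<Rightarrow> 'a \<Rightarrow> 'a \<Rightarrow> 'a \<Rightarrow> 'a \<Rightarrow> 'a \<Rightarrow> 'a" where
  "Sf s40 s04 s00 s22 s02 s20 x y z = s40 * x^2 + s04 * y^2 + s00 * z^2 + s22 * x * y + s02 * y * z + s20 * x * z"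

definition CQg :: "'a::comm_ring_1 \<Rightarrow> 'a \<Rightarrow> 'a \<Rightarrow> 'a \<Rightarrow> 'a \<Rightarrow> 'a \<Rightarrow> 'a \<Rightarrow> 'a \<Rightarrow> 'a \<Rightarrow> 'a" where
  "CQg a b c d e f x y z = (a * x^2 + b * y^2 + c * z^2 + d * x * y + e * y * z + f * z * x)^2 - x * (y^3 + x^2 * z)"

lemma CQ_form_CQg: "CQ_form a b c d e f x y z = CQg (to_ac a) (to_ac b) (to_ac c) (to_ac d) (to_ac e) (to_ac f) x y z"
  by (simp add: CQ_form_def CQg_def)

lemma decomp:
  fixes c :: "nat \<Rightarrow> nat \<Rightarrow> 'a::comm_ring_1"
  assumes two: "(2::'a) = 0"
    and "s40^2 = c 4 0" "s04^2 = c 0 4" "s00^2 = c 0 0" "s22^2 = c 2 2" "s02^2 = c 0 2" "s20^2 = c 2 0"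
    and "c 0 1 = 0" "c 0 3 = 0"
  shows "tform_eval 4 c x y z = (Sf s40 s04 s00 s22 s02 s20 x y z)^2
     + Rf (c 3 1) (c 3 0) (c 2 1) (c 1 3) (c 1 2) (c 1 1) (c 1 0) x y z"
proof -
  have h8: "c 0 (Suc 0) = 0" using assms(8) by simp
  have h9: "c 0 (Suc (Suc (Suc 0))) = 0" using assms(9) by (simp add: eval_nat_numeral)
  show ?thesis
  unfolding tf4 Sf_def Rf_def assms(2-9)[symmetric]
  apply (simp add: eval_nat_numeral algebra_simps h8 h9)
  apply (simp add: c2_bit0[OF two] c2_bit1[OF two] algebra_simps h8 h9)
  done
qed

lemma caseA_R:
  fixes a1 a2 a7 m Xv Yv Zv y :: "'a::comm_ring_1"
  assumes two: "(2::'a) = 0" and hy: "(a1 + a2 * m) * y = a2 * Yv + a7 * Zv"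
  shows "Rf a1 a2 0 (a7 * m^3) (a7 * m^2) (a7 * m) a7 Xv y (Yv + m * y) = a7 * (Xv * (Yv^3 + Xv^2 * Zv))"
proof -
  have "Rf a1 a2 0 (a7 * m^3) (a7 * m^2) (a7 * m) a7 Xv y (Yv + m * y) =
        Xv^3 * ((a1 + a2 * m) * y + a2 * Yv) + a7 * Xv * Yv^3"
    unfolding Rf_def
    apply (simp add: eval_nat_numeral algebra_simps)
    apply (simp add: c2_bit0[OF two] c2_bit1[OF two] algebra_simps)
    done
  also have "\<dots> = Xv^3 * (a2 * Yv + a2 * Yv + a7 * Zv) + a7 * Xv * Yv^3" by (simp add: hy add_ac)
  also have "\<dots> = a7 * (Xv * (Yv^3 + Xv^2 * Zv))"
    apply (simp add: eval_nat_numeral algebra_simps)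
    apply (simp add: c2_bit0[OF two] c2_bit1[OF two] algebra_simps)
    done
  finally show ?thesis .
qed

lemma caseB_R:
  fixes a1 a2 a4 Xv Yv Zv z :: "'a::comm_ring_1"
  assumes two: "(2::'a) = 0" and hz: "a2 * z = a1 * Yv + a4 * Zv"
  shows "Rf a1 a2 0 a4 0 0 0 Xv Yv z = a4 * (Xv * (Yv^3 + Xv^2 * Zv))"
proof -
  have "Rf a1 a2 0 a4 0 0 0 Xv Yv z = a1 * Xv^3 * Yv + Xv^3 * (a2 * z) + a4 * Xv * Yv^3"
    unfolding Rf_def by (simp add: algebra_simps)
  also have "\<dots> = a4 * (Xv * (Yv^3 + Xv^2 * Zv))" unfolding hz
    apply (simp add: eval_nat_numeral algebra_simps)
    apply (simp add: c2_bit0[OF two] c2_bit1[OF two] algebra_simps)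
    done
  finally show ?thesis .
qed

lemma Sf_lin:
  fixes Xv Yv Zv :: "'a::comm_ring_1"
  shows "Sf s40 s04 s00 s22 s02 s20 Xv (u1 * Yv + u2 * Zv) (w1 * Yv + w2 * Zv) =
     s40 * Xv^2 + (s04 * u1^2 + s00 * w1^2 + s02 * u1 * w1) * Yv^2 + (s04 * u2^2 + s00 * w2^2 + s02 * u2 * w2) * Zv^2
     + (s22 * u1 + s20 * w1) * Xv * Yv + (2 * s04 * u1 * u2 + 2 * s00 * w1 * w2 + s02 * (u1 * w2 + u2 * w1)) * Yv * Zv
     + (s22 * u2 + s20 * w2) * Zv * Xv"
  unfolding Sf_def by (simp add: eval_nat_numeral algebra_simps)

lemma poly_CQg: "poly (CQg [:a:] [:b:] [:c:] [:d:] [:e:] [:f:] A B C) t = CQg a b c d e f (poly A t) (poly B t) (poly C t)"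
  by (simp add: CQg_def mult.assoc)

lemma CQg_c0_dvd:
  fixes a b d e f E1 E2 E3 :: "'a::comm_ring_1"
  shows "CQg [:a:] [:b:] 0 [:d:] [:e:] [:f:] [:0, E1:] [:0, E2:] [:1, E3:] =
    [:0, 1:]^2 * ((smult a ([:0, 1:] * [:E1:]^2) + smult b ([:0, 1:] * [:E2:]^2) + smult d ([:0, 1:] * [:E1:] * [:E2:])
       + smult e ([:E2:] * [:1, E3:]) + smult f ([:1, E3:] * [:E1:]))^2
     - [:0, 1:] * [:E1:] * ([:0, 1:] * [:E2:]^3 + [:E1:]^2 * [:1, E3:]))"
proof -
  have x1: "[:0, E1:] = [:0, 1:] * [:E1:]" "[:0, E2:] = [:0, 1:] * [:E2:]" by simp_all
  show ?thesis unfolding x1 CQg_def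
    by (simp add: algebra_simps power2_eq_square power3_eq_cube)
qed

lemma sing_contra:
  fixes C :: "nat \<Rightarrow> nat \<Rightarrow> 'a::alg_closed_field"
  assumes nsC: "\<not> (\<exists>x y z. (x, y, z) \<noteq> (0, 0, 0) \<and> tform_eval 4 C x y z = 0 \<and>
          tform_eval 3 (dX 4 C) x y z = 0 \<and> tform_eval 3 (dY 4 C) x y z = 0 \<and> tform_eval 3 (dZ 4 C) x y z = 0)"
    and inv1: "\<And>V. lin Ni (lin Mk V) = V" and inv2: "\<And>V. lin Mk (lin Ni V) = V"
    and eq: "\<And>x y z. ev 4 C (lin Mk (x, y, z)) = sK * CQg qa qb 0 qd qe qf x y z"
  shows False
proof -
  define Ps where "Ps = lin Mk (0, 0, 1)"
  have Psnz: "Ps \<noteq> (0, 0, 0)" unfolding Ps_def by (rule lin_nz[OF inv1]) simp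
  have key: "coeff (tpoly 4 C Ps D) 0 = 0 \<and> coeff (tpoly 4 C Ps D) 1 = 0" for D
  proof -
    obtain E1 E2 E3 where E: "lin Ni D = (E1, E2, E3)" by (cases "lin Ni D")
    define W where "W = (smult qa ([:0, 1:] * [:E1:]^2) + smult qb ([:0, 1:] * [:E2:]^2) + smult qd ([:0, 1:] * [:E1:] * [:E2:])
       + smult qe ([:E2:] * [:1, E3:]) + smult qf ([:1, E3:] * [:E1:]))^2
     - [:0, 1:] * [:E1:] * ([:0, 1:] * [:E2:]^3 + [:E1:]^2 * [:1, E3:])"
    have tp: "tpoly 4 C Ps D = smult sK ([:0, 1:]^2 * W)"
    proof (rule poly_eq_alg_closed)
      fix t
      have "padd Ps t D = lin Mk (padd (0, 0, 1) t (E1, E2, E3))"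
        unfolding Ps_def lin_padd E[symmetric] inv2 ..
      hence "poly (tpoly 4 C Ps D) t = sK * CQg qa qb 0 qd qe qf (t * E1) (t * E2) (1 + t * E3)"
        by (simp add: poly_tpoly eq padd_def)
      also have "\<dots> = sK * poly (CQg [:qa:] [:qb:] [:0:] [:qd:] [:qe:] [:qf:] [:0, E1:] [:0, E2:] [:1, E3:]) t"
        by (simp only: poly_CQg) (simp add: algebra_simps)
      also have "\<dots> = poly (smult sK ([:0, 1:]^2 * W)) t"
        by (simp only: pCons_0_0 CQg_c0_dvd W_def poly_smult)
      finally show "poly (tpoly 4 C Ps D) t = poly (smult sK ([:0, 1:]^2 * W)) t" .
    qed
    have "monom 1 2 dvd [:0, 1:]^2 * W" by (simp add: monom_altdef)
    hence "\<forall>k<2. coeff ([:0, 1:]^2 * W) k = 0" by (simp add: monom_1_dvd_iff')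
    thus ?thesis by (simp add: tp)
  qed
  obtain x y z where Pxyz: "Ps = (x, y, z)" by (cases Ps)
  have g: "gd C Ps D = 0" for D using key[of D] unfolding coeff1_tpoly by simp
  have "ev 4 C Ps = 0" using key[of Ps] unfolding coeff0_tpoly by simp
  hence "tform_eval 4 C x y z = 0" by (simp add: ev_def Pxyz)
  moreover have "tform_eval 3 (dX 4 C) x y z = 0" using g[of "(1, 0, 0)"] by (simp add: gd_def Pxyz)
  moreover have "tform_eval 3 (dY 4 C) x y z = 0" using g[of "(0, 1, 0)"] by (simp add: gd_def Pxyz)
  moreover have "tform_eval 3 (dZ 4 C) x y z = 0" using g[of "(0, 0, 1)"] by (simp add: gd_def Pxyz)
  ultimately show False using nsC Psnz Pxyz by blast
qed

lemma lt_scale: "lt M (k * a, k * b, k * c) = (case lt M (a, b, c) of (u, v, w) \<Rightarrow> (k * u, k * v, k * w))"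
  by (simp add: lt_def algebra_simps)

theorem proposition2p4:
  fixes F :: "nat \<Rightarrow> nat \<Rightarrow> 'k::{finite, field}"
  assumes char: "CHAR('k) = 2"
    and ns: "nonsingular_quartic F"
    and eo: "exactly_one_bitangent F"
  shows "\<exists>a b c d e f :: 'k. c \<noteq> 0 \<and> k_isomorphic F (CQ_form a b c d e f)"
proof -
  define C where "C = ac_form F"
  have charK: "CHAR('k alg_closure) = 2" using char by simp
  have twoK: "(2::'k alg_closure) = 0" by (rule c2_two[OF charK])
  have twok: "(2::'k) = 0" by (rule c2_two[OF char])
  have xxK: "x + x = 0" for x :: "'k alg_closure" by (metis mult_2 mult_zero_left twoK)
  have mmK: "- x = x" for x :: "'k alg_closure" using xxK[of x] by (simp add: add_eq_0_iff2)
  have nsC: "\<not> (\<exists>x y z. (x, y, z) \<noteq> (0, 0, 0) \<and> tform_eval 4 C x y z = 0 \<and>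
          tform_eval 3 (dX 4 C) x y z = 0 \<and> tform_eval 3 (dY 4 C) x y z = 0 \<and> tform_eval 3 (dZ 4 C) x y z = 0)"
    using ns unfolding nonsingular_quartic_def C_def by blast
  have nl: "\<And>P R. indep3 P R \<Longrightarrow> tpoly 4 C P R \<noteq> 0" using no_line[OF nsC] by blast
  obtain l where B: "bit C l"
    and U: "\<forall>l'. bit C l' \<longrightarrow> (\<exists>\<mu>. l' = (\<mu> * fst l, \<mu> * fst (snd l), \<mu> * snd (snd l)))"
    using eo unfolding exactly_one_bitangent_def bitangent_bit C_def by blast
  obtain \<kappa> m1 m2 m3 where kap: "\<kappa> \<noteq> 0" and mnz: "(m1, m2, m3) \<noteq> (0, 0, 0)"
    and lk: "l = (\<kappa> * to_ac m1, \<kappa> * to_ac m2, \<kappa> * to_ac m3)"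
    using rational_line[OF char B[unfolded C_def] U[unfolded C_def]] by blast
  obtain M0 N0 s0 where s0: "s0 \<noteq> 0" and MN: "isId (mmul M0 N0)" and NM: "isId (mmul N0 M0)"
    and col0: "m1 * M0 0 0 + m2 * M0 1 0 + m3 * M0 2 0 = s0"
    and col1: "m1 * M0 0 1 + m2 * M0 1 1 + m3 * M0 2 1 = 0"
    and col2: "m1 * M0 0 2 + m2 * M0 1 2 + m3 * M0 2 2 = 0"
    using frame[OF mnz] by blast
  have inv1: "lin (acM M0) (lin (acM N0) V) = V" for V
    by (simp add: lin_mmul[symmetric] acM_mmul lin_id isId_acM MN)
  have inv2: "lin (acM N0) (lin (acM M0) V) = V" for V
    by (simp add: lin_mmul[symmetric] acM_mmul lin_id isId_acM NM)
  obtain c1 :: "nat \<Rightarrow> nat \<Rightarrow> 'k" where c1: "\<forall>x y z. tform_eval 4 (ac_form c1) x y z =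
      tform_eval 4 (ac_form F) (linK M0 0 x y z) (linK M0 1 x y z) (linK M0 2 x y z)"
    using compose_rep by blast
  have eqG1: "ev 4 (ac_form c1) V = ev 4 C (lin (acM M0) V)" for V
    by (cases V) (simp add: ev_def c1 lin_acM C_def)
  have eqF: "ev 4 C V = ev 4 (ac_form c1) (lin (acM N0) V)" for V
    using eqG1[of "lin (acM N0) V"] inv1 by simp
  have B1: "bit (ac_form c1) (lt (acM M0) l)" by (rule bit_lin[OF eqF inv1 inv2 B])
  have ltl: "lt (acM M0) l = (\<kappa> * to_ac s0, 0, 0)"
  proof -
    have t0: "to_ac m1 * to_ac (M0 0 0) + to_ac m2 * to_ac (M0 1 0) + to_ac m3 * to_ac (M0 2 0) = to_ac s0"
      using arg_cong[OF col0, of to_ac] by simp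
    have t1: "to_ac m1 * to_ac (M0 0 1) + to_ac m2 * to_ac (M0 1 1) + to_ac m3 * to_ac (M0 2 1) = 0"
      using arg_cong[OF col1, of to_ac] by simp
    have t2: "to_ac m1 * to_ac (M0 0 2) + to_ac m2 * to_ac (M0 1 2) + to_ac m3 * to_ac (M0 2 2) = 0"
      using arg_cong[OF col2, of to_ac] by simp
    have "lt (acM M0) l = (\<kappa> * (to_ac m1 * to_ac (M0 0 0) + to_ac m2 * to_ac (M0 1 0) + to_ac m3 * to_ac (M0 2 0)),
        \<kappa> * (to_ac m1 * to_ac (M0 0 1) + to_ac m2 * to_ac (M0 1 1) + to_ac m3 * to_ac (M0 2 1)),
        \<kappa> * (to_ac m1 * to_ac (M0 0 2) + to_ac m2 * to_ac (M0 1 2) + to_ac m3 * to_ac (M0 2 2)))"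
      by (simp add: lt_def acM_def lk algebra_simps)
    also have "\<dots> = (\<kappa> * to_ac s0, 0, 0)" unfolding t0 t1 t2 by simp
    finally show ?thesis .
  qed
  have ks: "\<kappa> * to_ac s0 \<noteq> 0" using kap s0 by simp
  have "ac_form c1 0 1 = 0 \<and> ac_form c1 0 3 = 0" using bit_x0[OF twoK ks] B1 ltl by simp
  hence z01: "ac_form c1 0 1 = 0" and z03: "ac_form c1 0 3 = 0" by simp_all
  have U1: "fst (snd l1) = 0 \<and> snd (snd l1) = 0" if b: "bit (ac_form c1) l1" for l1
  proof -
    have "bit C (lt (acM N0) l1)" by (rule bit_lin[OF eqG1 inv2 inv1 b])
    then obtain \<mu> where mu: "lt (acM N0) l1 = (\<mu> * fst l, \<mu> * fst (snd l), \<mu> * snd (snd l))" using U by blast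
    have "l1 = lt (acM M0) (lt (acM N0) l1)" using lt_lt_inv[where M="acM M0" and N="acM N0", OF inv2] by simp
    also have "\<dots> = (\<mu> * fst (lt (acM M0) l), \<mu> * fst (snd (lt (acM M0) l)), \<mu> * snd (snd (lt (acM M0) l)))"
      unfolding mu by (simp add: lt_def lk algebra_simps)
    finally show ?thesis by (simp add: ltl)
  qed
  have nl1: "tpoly 4 (ac_form c1) P R \<noteq> 0" if "indep3 P R" for P R
    unfolding tpoly_lin[OF eqG1] by (rule nl[OF lin_indep[OF inv2 that]])
  have X1: "\<not> (ac_form c1 1 3 + ac_form c1 1 2 * \<mu> + ac_form c1 1 1 * \<mu>^2 + ac_form c1 1 0 * \<mu>^3 = 0 \<and>
      ac_form c1 3 1 + ac_form c1 2 1 * t + ac_form c1 1 1 * t^2 + \<mu> * (ac_form c1 3 0 + ac_form c1 1 0 * t^2) = 0)" for \<mu> t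
  proof
    assume h: "ac_form c1 1 3 + ac_form c1 1 2 * \<mu> + ac_form c1 1 1 * \<mu>^2 + ac_form c1 1 0 * \<mu>^3 = 0 \<and>
      ac_form c1 3 1 + ac_form c1 2 1 * t + ac_form c1 1 1 * t^2 + \<mu> * (ac_form c1 3 0 + ac_form c1 1 0 * t^2) = 0"
    have "bit (ac_form c1) (t, \<mu>, 1)" using extra1[OF twoK z01 z03 charK nl1] h by blast
    thus False using U1 by fastforce
  qed
  have X2: "\<not> (ac_form c1 1 0 = 0 \<and> ac_form c1 3 0 + ac_form c1 2 1 * t + ac_form c1 1 2 * t^2 = 0)" for t
  proof
    assume h: "ac_form c1 1 0 = 0 \<and> ac_form c1 3 0 + ac_form c1 2 1 * t + ac_form c1 1 2 * t^2 = 0"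
    have "bit (ac_form c1) (t, 1, 0)" using extra2[OF twoK z01 z03 charK nl1] h by blast
    thus False using U1 by fastforce
  qed
  define a1 where "a1 = c1 3 1"
  define a2 where "a2 = c1 3 0"
  define a3 where "a3 = c1 2 1"
  define a4 where "a4 = c1 1 3"
  define a5 where "a5 = c1 1 2"
  define a6 where "a6 = c1 1 1"
  define a7 where "a7 = c1 1 0"
  have X1': "\<not> (to_ac a4 + to_ac a5 * \<mu> + to_ac a6 * \<mu>^2 + to_ac a7 * \<mu>^3 = 0 \<and>
      to_ac a1 + to_ac a3 * t + to_ac a6 * t^2 + \<mu> * (to_ac a2 + to_ac a7 * t^2) = 0)" for \<mu> t
    using X1[of \<mu> t] by (simp add: ac_form_def a1_def a2_def a3_def a4_def a5_def a6_def a7_def)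
  have X2': "\<not> (a7 = 0 \<and> to_ac a2 + to_ac a3 * t + to_ac a5 * t^2 = 0)" for t
    using X2[of t] by (simp add: ac_form_def a2_def a3_def a5_def a7_def)
  have final: "\<exists>s u1 u2 w1 w2. s \<noteq> 0 \<and> u1 * w2 - u2 * w1 \<noteq> 0 \<and> (\<forall>Xv Yv Zv.
      Rf (to_ac a1) (to_ac a2) (to_ac a3) (to_ac a4) (to_ac a5) (to_ac a6) (to_ac a7) Xv
        (to_ac u1 * Yv + to_ac u2 * Zv) (to_ac w1 * Yv + to_ac w2 * Zv) = to_ac s * (Xv * (Yv^3 + Xv^2 * Zv)))"
  proof (cases "a7 = 0")
    case False
    have T7: "to_ac a7 \<noteq> 0" using False by simp
    obtain \<mu>0 where r0: "to_ac a4 + to_ac a5 * \<mu>0 + to_ac a6 * \<mu>0^2 + to_ac a7 * \<mu>0^3 = 0"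
      using cubic_root[OF T7] by blast
    have allr: "to_ac a6 + to_ac a7 * \<nu> = 0 \<and> to_ac a3 = 0 \<and> to_ac a1 + to_ac a2 * \<nu> \<noteq> 0"
      if rt: "to_ac a4 + to_ac a5 * \<nu> + to_ac a6 * \<nu>^2 + to_ac a7 * \<nu>^3 = 0" for \<nu>
    proof (rule ccontr)
      assume "\<not> (to_ac a6 + to_ac a7 * \<nu> = 0 \<and> to_ac a3 = 0 \<and> to_ac a1 + to_ac a2 * \<nu> \<noteq> 0)"
      then obtain t where t: "(to_ac a6 + to_ac a7 * \<nu>) * t^2 + to_ac a3 * t + (to_ac a1 + to_ac a2 * \<nu>) = 0"
        using quad_root by blast
      have "to_ac a1 + to_ac a3 * t + to_ac a6 * t^2 + \<nu> * (to_ac a2 + to_ac a7 * t^2) =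
            (to_ac a6 + to_ac a7 * \<nu>) * t^2 + to_ac a3 * t + (to_ac a1 + to_ac a2 * \<nu>)"
        by (simp add: algebra_simps)
      thus False using t rt X1'[of \<nu> t] by simp
    qed
    from allr[OF r0] have h6: "to_ac a6 + to_ac a7 * \<mu>0 = 0" and h3: "to_ac a3 = 0"
      and hb: "to_ac a1 + to_ac a2 * \<mu>0 \<noteq> 0" by auto
    have h6': "to_ac a6 = to_ac a7 * \<mu>0"
    proof -
      have "to_ac a7 * \<mu>0 = - to_ac a6" using h6 by (simp add: eq_neg_iff_add_eq_0 add.commute)
      thus ?thesis using mmK by simp
    qed
    define m where "m = a6 / a7"
    have mu0: "\<mu>0 = to_ac m" using h6' T7 by (simp add: m_def field_simps)
    have "to_ac a6 * \<mu>0^2 + to_ac a7 * \<mu>0^3 = 0" unfolding h6'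
      apply (simp add: eval_nat_numeral algebra_simps)
      apply (simp add: c2_bit0[OF twoK] c2_bit1[OF twoK] algebra_simps)
      done
    hence "to_ac a4 + to_ac a5 * \<mu>0 = 0" using r0 by (simp add: algebra_simps)
    hence h4: "to_ac a4 = to_ac a5 * \<mu>0" using mmK by (metis add_eq_0_iff2)
    obtain \<nu> where nu: "\<nu> ^ 2 = to_ac a5 / to_ac a7" using nth_root_exists[of 2] by auto
    have hn: "to_ac a5 = to_ac a7 * \<nu>^2" using nu T7 by (simp add: field_simps)
    have "to_ac a4 + to_ac a5 * \<nu> + to_ac a6 * \<nu>^2 + to_ac a7 * \<nu>^3 = 0" unfolding h4 h6' hn
      apply (simp add: eval_nat_numeral algebra_simps)
      apply (simp add: c2_bit0[OF twoK] c2_bit1[OF twoK] algebra_simps)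
      done
    hence "to_ac a6 + to_ac a7 * \<nu> = 0" using allr by blast
    hence "to_ac a7 * \<nu> = to_ac a7 * \<mu>0" using h6 by (metis add_left_cancel)
    hence nm: "\<nu> = \<mu>0" using T7 by simp
    have e5: "a5 = a7 * m^2" using hn nm mu0 by (metis to_ac_eq_iff to_ac_mult to_ac_power)
    have e4: "a4 = a7 * m^3" using h4 hn nm mu0
      by (metis (no_types, lifting) mult.assoc power2_eq_square power3_eq_cube to_ac_eq_iff to_ac_mult)
    have e6: "a6 = a7 * m" using T7 False by (simp add: m_def)
    have e3: "a3 = 0" using h3 by simp
    define \<beta> where "\<beta> = a1 + a2 * m"
    have "to_ac \<beta> = to_ac a1 + to_ac a2 * \<mu>0" by (simp add: \<beta>_def mu0)
    hence b0: "\<beta> \<noteq> 0" using hb by auto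
    show ?thesis
    proof (intro exI conjI allI)
      show "a7 \<noteq> 0" by (rule False)
      have "a2 / \<beta> * (m * (a7 / \<beta>)) - a7 / \<beta> * (1 + m * (a2 / \<beta>)) = - (a7 / \<beta>)"
        using b0 by (simp add: field_simps)
      thus "a2 / \<beta> * (m * (a7 / \<beta>)) - a7 / \<beta> * (1 + m * (a2 / \<beta>)) \<noteq> 0" using b0 False by simp
      fix Xv Yv Zv :: "'k alg_closure"
      define y where "y = to_ac (a2 / \<beta>) * Yv + to_ac (a7 / \<beta>) * Zv"
      have zz: "to_ac (1 + m * (a2 / \<beta>)) * Yv + to_ac (m * (a7 / \<beta>)) * Zv = Yv + to_ac m * y"
        by (simp add: y_def algebra_simps)
      have hy: "(to_ac a1 + to_ac a2 * to_ac m) * y = to_ac a2 * Yv + to_ac a7 * Zv"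
      proof -
        have "to_ac a1 + to_ac a2 * to_ac m = to_ac \<beta>" by (simp add: \<beta>_def)
        thus ?thesis using b0 by (simp add: y_def field_simps)
      qed
      show "Rf (to_ac a1) (to_ac a2) (to_ac a3) (to_ac a4) (to_ac a5) (to_ac a6) (to_ac a7) Xv
        (to_ac (a2 / \<beta>) * Yv + to_ac (a7 / \<beta>) * Zv) (to_ac (1 + m * (a2 / \<beta>)) * Yv + to_ac (m * (a7 / \<beta>)) * Zv)
        = to_ac a7 * (Xv * (Yv^3 + Xv^2 * Zv))"
        unfolding zz y_def[symmetric] unfolding e3 e4 e5 e6 to_ac_mult to_ac_power to_ac_0
        by (rule caseA_R[OF twoK hy])
    qed
  next
    case True
    have "to_ac a5 = 0 \<and> to_ac a3 = 0 \<and> to_ac a2 \<noteq> 0"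
    proof (rule ccontr)
      assume "\<not> (to_ac a5 = 0 \<and> to_ac a3 = 0 \<and> to_ac a2 \<noteq> 0)"
      then obtain t where t: "to_ac a5 * t^2 + to_ac a3 * t + to_ac a2 = 0" using quad_root by blast
      hence "to_ac a2 + to_ac a3 * t + to_ac a5 * t^2 = 0" by (simp add: algebra_simps)
      thus False using X2'[of t] True by simp
    qed
    hence e5: "a5 = 0" and e3: "a3 = 0" and h2: "a2 \<noteq> 0" by auto
    have T2: "to_ac a2 \<noteq> 0" using h2 by simp
    have e6: "a6 = 0"
    proof (rule ccontr)
      assume "a6 \<noteq> 0"
      hence T6: "to_ac a6 \<noteq> 0" by simp
      obtain \<mu> where mu: "\<mu> ^ 2 = to_ac a4 / to_ac a6" using nth_root_exists[of 2] by auto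
      obtain t where t: "t ^ 2 = (to_ac a1 + to_ac a2 * \<mu>) / to_ac a6" using nth_root_exists[of 2] by auto
      have m2: "to_ac a6 * \<mu>^2 = to_ac a4" using mu T6 by (simp add: field_simps)
      have t2: "to_ac a6 * t^2 = to_ac a1 + to_ac a2 * \<mu>" using t T6 by (simp add: field_simps)
      have "to_ac a4 + to_ac a5 * \<mu> + to_ac a6 * \<mu>^2 + to_ac a7 * \<mu>^3 = to_ac a4 + to_ac a4"
        using m2 True e5 by simp
      hence E2: "to_ac a4 + to_ac a5 * \<mu> + to_ac a6 * \<mu>^2 + to_ac a7 * \<mu>^3 = 0" using xxK by simp
      have "to_ac a1 + to_ac a3 * t + to_ac a6 * t^2 + \<mu> * (to_ac a2 + to_ac a7 * t^2) =
            (to_ac a1 + to_ac a1) + (to_ac a2 * \<mu> + to_ac a2 * \<mu>)"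
        using t2 True e3 by (simp add: algebra_simps)
      hence E1: "to_ac a1 + to_ac a3 * t + to_ac a6 * t^2 + \<mu> * (to_ac a2 + to_ac a7 * t^2) = 0" using xxK by simp
      show False using X1' E1 E2 by blast
    qed
    have h4: "a4 \<noteq> 0"
    proof
      assume a40: "a4 = 0"
      define \<mu> where "\<mu> = to_ac a1 / to_ac a2"
      have E2: "to_ac a4 + to_ac a5 * \<mu> + to_ac a6 * \<mu>^2 + to_ac a7 * \<mu>^3 = 0" using a40 e5 e6 True by simp
      have "to_ac a1 + to_ac a3 * 0 + to_ac a6 * 0^2 + \<mu> * (to_ac a2 + to_ac a7 * 0^2) = to_ac a1 + to_ac a1"
        using T2 e3 e6 True by (simp add: \<mu>_def)
      hence E1: "to_ac a1 + to_ac a3 * 0 + to_ac a6 * 0^2 + \<mu> * (to_ac a2 + to_ac a7 * 0^2) = 0" using xxK by simp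
      show False using X1' E1 E2 by blast
    qed
    show ?thesis
    proof (intro exI conjI allI)
      show "a4 \<noteq> 0" by (rule h4)
      show "1 * (a4 / a2) - 0 * (a1 / a2) \<noteq> 0" using h4 h2 by simp
      fix Xv Yv Zv :: "'k alg_closure"
      have hz: "to_ac a2 * (to_ac (a1 / a2) * Yv + to_ac (a4 / a2) * Zv) = to_ac a1 * Yv + to_ac a4 * Zv"
        using T2 by (simp add: field_simps)
      show "Rf (to_ac a1) (to_ac a2) (to_ac a3) (to_ac a4) (to_ac a5) (to_ac a6) (to_ac a7) Xv
        (to_ac 1 * Yv + to_ac 0 * Zv) (to_ac (a1 / a2) * Yv + to_ac (a4 / a2) * Zv) = to_ac a4 * (Xv * (Yv^3 + Xv^2 * Zv))"
        using caseB_R[OF twoK hz, of Xv] by (simp add: e3 e5 e6 True)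
    qed
  qed
  obtain s u1 u2 w1 w2 where sz: "s \<noteq> 0" and Dz: "u1 * w2 - u2 * w1 \<noteq> 0"
    and Rid: "\<And>Xv Yv Zv. Rf (to_ac a1) (to_ac a2) (to_ac a3) (to_ac a4) (to_ac a5) (to_ac a6) (to_ac a7) Xv
        (to_ac u1 * Yv + to_ac u2 * Zv) (to_ac w1 * Yv + to_ac w2 * Zv) = to_ac s * (Xv * (Yv^3 + Xv^2 * Zv))"
    using final by blast
  have ksq: "\<exists>b. b^2 = a" for a :: 'k using k_sqrt[OF char] by blast
  define rho :: "'k \<Rightarrow> 'k" where "rho a = (SOME b. b^2 = a)" for a
  have rho: "rho a ^ 2 = a" for a unfolding rho_def by (rule someI_ex[OF ksq])
  have z01k: "c1 0 1 = 0" and z01s: "c1 0 (Suc 0) = 0" and z03k: "c1 0 3 = 0"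
    using z01 z03 by (simp_all add: ac_form_def)
  define s40 where "s40 = rho (c1 4 0)"
  define s04 where "s04 = rho (c1 0 4)"
  define s00 where "s00 = rho (c1 0 0)"
  define s22 where "s22 = rho (c1 2 2)"
  define s02 where "s02 = rho (c1 0 2)"
  define s20 where "s20 = rho (c1 2 0)"
  have dec: "tform_eval 4 (ac_form c1) x y z =
      (Sf (to_ac s40) (to_ac s04) (to_ac s00) (to_ac s22) (to_ac s02) (to_ac s20) x y z)^2
      + Rf (to_ac a1) (to_ac a2) (to_ac a3) (to_ac a4) (to_ac a5) (to_ac a6) (to_ac a7) x y z" for x y z
  proof -
    have "tform_eval 4 (ac_form c1) x y z =
      (Sf (to_ac s40) (to_ac s04) (to_ac s00) (to_ac s22) (to_ac s02) (to_ac s20) x y z)^2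
      + Rf (ac_form c1 3 1) (ac_form c1 3 0) (ac_form c1 2 1) (ac_form c1 1 3) (ac_form c1 1 2) (ac_form c1 1 1) (ac_form c1 1 0) x y z"
      by (rule decomp[OF twoK]) (simp_all add: ac_form_def s40_def s04_def s00_def s22_def s02_def s20_def
             z01k z01s z03k rho flip: to_ac_power)
    thus ?thesis by (simp add: ac_form_def a1_def a2_def a3_def a4_def a5_def a6_def a7_def)
  qed
  define rs where "rs = rho s"
  have rsq: "to_ac rs ^ 2 = to_ac s" by (simp add: rs_def rho flip: to_ac_power)
  have rs0: "rs \<noteq> 0" using rho[of s] sz by (auto simp: rs_def)
  define M1 where "M1 = mat3 1 0 0 0 u1 u2 0 w1 w2"
  define D where "D = u1 * w2 - u2 * w1"
  define N1 where "N1 = mat3 1 0 0 0 (w2 / D) (- u2 / D) 0 (- w1 / D) (u1 / D)"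
  have M1N1: "isId (mmul M1 N1)" and N1M1: "isId (mmul N1 M1)"
    using frame1[OF D_def] Dz by (simp_all add: M1_def N1_def D_def)
  define M where "M = mmul M0 M1"
  define qa where "qa = s40 / rs"
  define qb where "qb = (s04 * u1^2 + s00 * w1^2 + s02 * u1 * w1) / rs"
  define qc where "qc = (s04 * u2^2 + s00 * w2^2 + s02 * u2 * w2) / rs"
  define qd where "qd = (s22 * u1 + s20 * w1) / rs"
  define qe where "qe = (2 * s04 * u1 * u2 + 2 * s00 * w1 * w2 + s02 * (u1 * w2 + u2 * w1)) / rs"
  define qf where "qf = (s22 * u2 + s20 * w2) / rs"
  have linM1: "lin (acM M1) (x, y, z) = (x, to_ac u1 * y + to_ac u2 * z, to_ac w1 * y + to_ac w2 * z)" for x y z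
    by (simp add: M1_def lin_def acM_def mat3_def)
  have Sq: "to_ac rs * (to_ac qa * x^2 + to_ac qb * y^2 + to_ac qc * z^2 + to_ac qd * x * y + to_ac qe * y * z + to_ac qf * z * x)
     = Sf (to_ac s40) (to_ac s04) (to_ac s00) (to_ac s22) (to_ac s02) (to_ac s20) x (to_ac u1 * y + to_ac u2 * z) (to_ac w1 * y + to_ac w2 * z)"
    for x y z
    unfolding Sf_lin using rs0
    by (simp add: qa_def qb_def qc_def qd_def qe_def qf_def field_simps)
  have main: "tform_eval 4 (ac_form F)
      (to_ac (M 0 0) * x + to_ac (M 0 1) * y + to_ac (M 0 2) * z)
      (to_ac (M 1 0) * x + to_ac (M 1 1) * y + to_ac (M 1 2) * z)
      (to_ac (M 2 0) * x + to_ac (M 2 1) * y + to_ac (M 2 2) * z) = to_ac s * CQ_form qa qb qc qd qe qf x y z" for x y z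
  proof -
    define Qv where "Qv = to_ac qa * x^2 + to_ac qb * y^2 + to_ac qc * z^2 + to_ac qd * x * y + to_ac qe * y * z + to_ac qf * z * x"
    have "tform_eval 4 (ac_form F)
      (to_ac (M 0 0) * x + to_ac (M 0 1) * y + to_ac (M 0 2) * z)
      (to_ac (M 1 0) * x + to_ac (M 1 1) * y + to_ac (M 1 2) * z)
      (to_ac (M 2 0) * x + to_ac (M 2 1) * y + to_ac (M 2 2) * z) = ev 4 C (lin (acM M) (x, y, z))"
      by (simp add: ev_def lin_def acM_def C_def)
    also have "\<dots> = ev 4 C (lin (acM M0) (lin (acM M1) (x, y, z)))"
      by (simp add: M_def acM_mmul[symmetric] lin_mmul)
    also have "\<dots> = ev 4 (ac_form c1) (lin (acM M1) (x, y, z))" by (simp add: eqG1)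
    also have "\<dots> = tform_eval 4 (ac_form c1) x (to_ac u1 * y + to_ac u2 * z) (to_ac w1 * y + to_ac w2 * z)"
      by (simp add: linM1 ev_def)
    also have "\<dots> = (to_ac rs * Qv)^2 + to_ac s * (x * (y^3 + x^2 * z))"
      unfolding dec Rid Qv_def Sq ..
    also have "\<dots> = to_ac s * Qv^2 + to_ac s * (x * (y^3 + x^2 * z))"
      by (simp add: power_mult_distrib rsq)
    also have "\<dots> = to_ac s * CQ_form qa qb qc qd qe qf x y z"
      unfolding CQ_form_def Qv_def diff_conv_add_uminus mmK by (simp add: distrib_left)
    finally show ?thesis .
  qed
  have det: "det3 M \<noteq> 0"
  proof -
    have "det3 M1 = u1 * w2 - u2 * w1" by (simp add: M1_def det3_def mat3_def)
    thus ?thesis using inv_det[OF MN] Dz by (simp add: M_def det_mmul)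
  qed
  have cnz: "qc \<noteq> 0"
  proof
    assume qc0: "qc = 0"
    have i1: "lin (acM (mmul N1 N0)) (lin (acM M) V) = V" for V
    proof -
      have "lin (acM (mmul N1 N0)) (lin (acM M) V) = lin (acM N1) (lin (acM N0) (lin (acM M0) (lin (acM M1) V)))"
        by (simp only: M_def acM_mmul[symmetric] lin_mmul)
      also have "\<dots> = lin (acM N1) (lin (acM M1) V)" by (simp only: inv2)
      also have "\<dots> = V" by (simp only: lin_mmul[symmetric] acM_mmul lin_id isId_acM N1M1)
      finally show ?thesis .
    qed
    have i2: "lin (acM M) (lin (acM (mmul N1 N0)) V) = V" for V
    proof -
      have "lin (acM M) (lin (acM (mmul N1 N0)) V) = lin (acM M0) (lin (acM M1) (lin (acM N1) (lin (acM N0) V)))"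
        by (simp only: M_def acM_mmul[symmetric] lin_mmul)
      also have "\<dots> = lin (acM M0) (lin (acM N0) V)"
      proof -
        have "lin (acM M1) (lin (acM N1) W) = W" for W
          by (simp only: lin_mmul[symmetric] acM_mmul lin_id isId_acM M1N1)
        thus ?thesis by simp
      qed
      also have "\<dots> = V" by (simp only: inv1)
      finally show ?thesis .
    qed
    have eq: "ev 4 C (lin (acM M) (x, y, z)) =
        to_ac s * CQg (to_ac qa) (to_ac qb) 0 (to_ac qd) (to_ac qe) (to_ac qf) x y z" for x y z
      using main[of x y z] qc0 by (simp add: ev_def lin_def acM_def C_def CQ_form_CQg)
    show False by (rule sing_contra[OF nsC i1 i2 eq])
  qed
  show ?thesis unfolding k_isomorphic_def using cnz det sz main by blast
qed

end
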